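(* Let $H\in(0,1/2]$ and $\rho\in(-1,1)$. The ordinary differential equation $$g'(y)^2\left(1+2\rho\frac{y}{2H+1}+\frac{y^2}{(2H+1)^2}\right) = 1-(1-2H)\left(1-\frac{y g'(y)}{g(y)}\right),\qquad g(0)=0,\quad g'(0)>0,$$ has a unique $C^1$ solution $g$ on $\mathbb{R}$. This solution is $C^2$, satisfies, as $y\to0$, $$g(y)=g'(0)y+g''(0)\tfrac{y^2}{2}+O(y^3),\quad g'(y)=g'(0)+g''(0)y+O(y^2),\quad g''(y)=g''(0)+O(y),$$ and satisfies $g(y)/y>0$ for all $y\neq0$. *)

theory Defs
  imports "HOL-Analysis.Analysis" "HOL-Library.Landau_Symbols"
begin

definition C1_real :: "(real \<Rightarrow> real) \<Rightarrow> bool" where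
  "C1_real g \<longleftrightarrow> (\<forall>y. g differentiable (at y)) \<and> continuous_on UNIV (deriv g)"

definition C2_real :: "(real \<Rightarrow> real) \<Rightarrow> bool" where
  "C2_real g \<longleftrightarrow> C1_real g \<and> C1_real (deriv g)"

definition ode_sol :: "real \<Rightarrow> real \<Rightarrow> (real \<Rightarrow> real) \<Rightarrow> bool" where
  "ode_sol H \<rho> g \<longleftrightarrow> C1_real g \<and> g 0 = 0 \<and> deriv g 0 > 0 \<and>
     (\<forall>y. y \<noteq> 0 \<longrightarrow> g y \<noteq> 0 \<and>
        (deriv g y)\<^sup>2 * (1 + 2 * \<rho> * y / (2 * H + 1) + y\<^sup>2 / (2 * H + 1)\<^sup>2)
          = 1 - (1 - 2 * H) * (1 - y * deriv g y / g y))"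

end

theory Submission
  imports Defs
begin

definition Qf :: "real \<Rightarrow> real \<Rightarrow> real \<Rightarrow> real" where
  "Qf H \<rho> y = 1 + 2 * \<rho> * y / (2 * H + 1) + y\<^sup>2 / (2 * H + 1)\<^sup>2"

definition Rf :: "real \<Rightarrow> real \<Rightarrow> real \<Rightarrow> real \<Rightarrow> real" where
  "Rf H q u h = q * u * h\<^sup>2 - (1 - 2 * H) * h - 2 * H * u"

definition Phi :: "real \<Rightarrow> real \<Rightarrow> real \<Rightarrow> real" where
  "Phi H q u = ((1 - 2 * H) + sqrt ((1 - 2 * H)\<^sup>2 + 8 * H * q * u\<^sup>2)) / (2 * q * u)"

lemma Qf_lower:
  assumes "0 < H" "\<bar>\<rho>\<bar> < 1"
  shows "Qf H \<rho> y \<ge> (1 - \<bar>\<rho>\<bar>) * (1 + y\<^sup>2 / (2 * H + 1)\<^sup>2)"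
proof -
  define t where "t = y / (2 * H + 1)"
  have a: "2 * H + 1 > 0" using assms by simp
  have Q: "Qf H \<rho> y = 1 + 2 * \<rho> * t + t\<^sup>2"
    unfolding Qf_def t_def using a by (simp add: power_divide)
  have "2 * \<rho> * t \<ge> - \<bar>\<rho>\<bar> * (1 + t\<^sup>2)"
  proof -
    have "0 \<le> (\<bar>t\<bar> - 1)\<^sup>2" by simp
    moreover have "(\<bar>t\<bar> - 1)\<^sup>2 = t\<^sup>2 - 2 * \<bar>t\<bar> + 1" by (simp add: power2_diff)
    ultimately have "2 * \<bar>t\<bar> \<le> 1 + t\<^sup>2" by linarith
    hence "\<bar>\<rho>\<bar> * (2 * \<bar>t\<bar>) \<le> \<bar>\<rho>\<bar> * (1 + t\<^sup>2)" by (simp add: mult_left_mono)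
    moreover have "\<bar>2 * \<rho> * t\<bar> = \<bar>\<rho>\<bar> * (2 * \<bar>t\<bar>)" by (simp add: abs_mult)
    ultimately show ?thesis by linarith
  qed
  hence "Qf H \<rho> y \<ge> (1 - \<bar>\<rho>\<bar>) * (1 + t\<^sup>2)" unfolding Q by (simp add: algebra_simps)
  thus ?thesis unfolding t_def using a by (simp add: power_divide)
qed

lemma Qf_pos:
  assumes "0 < H" "\<bar>\<rho>\<bar> < 1"
  shows "Qf H \<rho> y \<ge> 1 - \<bar>\<rho>\<bar>" "Qf H \<rho> y > 0"
proof -
  have "(1 - \<bar>\<rho>\<bar>) * 1 \<le> (1 - \<bar>\<rho>\<bar>) * (1 + y\<^sup>2 / (2 * H + 1)\<^sup>2)"
    using assms by (intro mult_left_mono) auto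
  hence "1 - \<bar>\<rho>\<bar> \<le> (1 - \<bar>\<rho>\<bar>) * (1 + y\<^sup>2 / (2 * H + 1)\<^sup>2)" by simp
  thus "Qf H \<rho> y \<ge> 1 - \<bar>\<rho>\<bar>" using Qf_lower[OF assms, of y] by linarith
  thus "Qf H \<rho> y > 0" using assms by linarith
qed

lemma Qf_neg: "Qf H (-\<rho>) (-y) = Qf H \<rho> y"
  unfolding Qf_def by simp

lemma Qf_zero: "Qf H \<rho> 0 = 1" unfolding Qf_def by simp

lemma Qf_mono_bound:
  assumes "0 < H" "\<bar>\<rho>\<bar> < 1" "0 \<le> s" "s \<le> y"
  shows "Qf H \<rho> s \<le> 2 * Qf H \<rho> y / (1 - \<bar>\<rho>\<bar>)"
proof -
  define a where "a = 2 * H + 1"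
  have a: "a > 0" using assms by (simp add: a_def)
  define t where "t = s / a" define T where "T = y / a"
  have tT: "0 \<le> t" "t \<le> T" using assms a by (auto simp: t_def T_def divide_right_mono)
  have "Qf H \<rho> s = 1 + 2 * \<rho> * t + t\<^sup>2" unfolding Qf_def t_def a_def[symmetric] using a by (simp add: power_divide)
  also have "\<dots> \<le> 1 + 2 * t + t\<^sup>2"
  proof -
    have "\<rho> * t \<le> 1 * t" using assms tT by (intro mult_right_mono) auto
    hence "\<rho> * t \<le> t" by simp
    thus ?thesis by simp
  qed
  also have "\<dots> \<le> 2 * (1 + T\<^sup>2)"
  proof -
    have "t\<^sup>2 \<le> T\<^sup>2" using tT by (simp add: power_mono)
    moreover have "2 * t \<le> 1 + t\<^sup>2"
    proof -
      have "0 \<le> (t - 1)\<^sup>2" by simp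
      moreover have "(t - 1)\<^sup>2 = t\<^sup>2 - 2 * t + 1" by (simp add: power2_diff)
      ultimately show ?thesis by linarith
    qed
    moreover have "2 * (1 + T\<^sup>2) = 2 + 2 * T\<^sup>2" by simp
    ultimately show ?thesis by linarith
  qed
  also have "\<dots> \<le> 2 * Qf H \<rho> y / (1 - \<bar>\<rho>\<bar>)"
  proof -
    have "(1 - \<bar>\<rho>\<bar>) * (1 + T\<^sup>2) \<le> Qf H \<rho> y" using Qf_lower[OF assms(1,2), of y]
      by (simp add: T_def a_def power_divide)
    thus ?thesis using assms by (simp add: field_simps)
  qed
  finally show ?thesis .
qed

lemma Phi_props:
  assumes "0 < H" "H \<le> 1/2" "q > 0" "u > 0"
  shows "Phi H q u > 0" "Rf H q u (Phi H q u) = 0"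
proof -
  define b where "b = 1 - 2 * H"
  define D where "D = sqrt (b\<^sup>2 + 8 * H * q * u\<^sup>2)"
  have b: "b \<ge> 0" using assms by (simp add: b_def)
  have pos: "8 * H * q * u\<^sup>2 > 0" using assms by simp
  have D2: "D\<^sup>2 = b\<^sup>2 + 8 * H * q * u\<^sup>2" unfolding D_def using pos by (simp add: add_nonneg_pos)
  have Dpos: "D > 0" unfolding D_def using pos by (simp add: add_nonneg_pos)
  have P: "Phi H q u = (b + D) / (2 * q * u)" by (simp add: Phi_def b_def D_def)
  show "Phi H q u > 0" unfolding P using b Dpos assms by simp
  have "Rf H q u (Phi H q u) = q * u * ((b + D) / (2 * q * u))\<^sup>2 - b * ((b + D) / (2 * q * u)) - 2 * H * u"
    unfolding Rf_def P b_def by simp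
  also have "\<dots> = (D\<^sup>2 - b\<^sup>2 - 8 * H * q * u\<^sup>2) / (4 * q * u)"
    using assms by (simp add: field_simps power2_eq_square)
  also have "\<dots> = 0" using D2 by simp
  finally show "Rf H q u (Phi H q u) = 0" .
qed

lemma Rf_pert:
  assumes "0 < H" "H \<le> 1/2" "q > 0" "u > 0" "h > 0" "hs > 0" "Rf H q u h = 0"
  shows "\<bar>h - hs\<bar> \<le> \<bar>Rf H q u hs\<bar> / (q * u * hs)"
proof -
  define b where "b = 1 - 2 * H"
  have id: "(h - hs) * (q * u * (h + hs) - b) = - Rf H q u hs"
    using assms(7) unfolding Rf_def b_def by (simp add: algebra_simps power2_eq_square)
  have "q * u * h * h - b * h = 2 * H * u" using assms(7) unfolding Rf_def b_def by (simp add: algebra_simps power2_eq_square)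
  hence "(q * u * h - b) * h = 2 * H * u" by (simp add: algebra_simps)
  moreover have "2 * H * u > 0" using assms by simp
  ultimately have "q * u * h - b > 0" using assms(5) by (metis zero_less_mult_pos2)
  hence den: "q * u * (h + hs) - b \<ge> q * u * hs" by (simp add: algebra_simps)
  have qus: "q * u * hs > 0" using assms by simp
  have "\<bar>h - hs\<bar> * (q * u * hs) \<le> \<bar>h - hs\<bar> * (q * u * (h + hs) - b)"
    using den by (simp add: mult_left_mono)
  also have "\<dots> = \<bar>(h - hs) * (q * u * (h + hs) - b)\<bar>"
    using qus den by (simp add: abs_mult)
  also have "\<dots> = \<bar>Rf H q u hs\<bar>" unfolding id by simp
  finally show ?thesis using qus by (simp add: field_simps)
qed

lemma Rf_lip:
  assumes "0 < H" "H \<le> 1/2" "q > 0" "u1 > 0" "u2 > 0" "h1 > 0" "h2 > 0"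
    "Rf H q u1 h1 = 0" "Rf H q u2 h2 = 0"
  shows "\<bar>h1 - h2\<bar> \<le> (1 - 2 * H) / (q * u1 * u2) * \<bar>u1 - u2\<bar>"
proof -
  have A: "\<bar>h1 - h2\<bar> \<le> \<bar>Rf H q u1 h2\<bar> / (q * u1 * h2)" by (rule Rf_pert) (use assms in auto)
  have B: "Rf H q u1 h2 = (u1 - u2) * ((1 - 2 * H) * h2 / u2)"
  proof -
    have "q * h2\<^sup>2 - 2 * H = (1 - 2 * H) * h2 / u2" using assms(9) assms(5)
      unfolding Rf_def by (simp add: field_simps)
    moreover have "Rf H q u1 h2 = Rf H q u1 h2 - Rf H q u2 h2" using assms(9) by simp
    moreover have "\<dots> = (u1 - u2) * (q * h2\<^sup>2 - 2 * H)" unfolding Rf_def by (simp add: algebra_simps)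
    ultimately show ?thesis by simp
  qed
  have C: "\<bar>(u1 - u2) * ((1 - 2 * H) * h2 / u2)\<bar> = \<bar>u1 - u2\<bar> * ((1 - 2 * H) * h2 / u2)"
    using assms by (simp add: abs_mult)
  have D: "\<bar>u1 - u2\<bar> * ((1 - 2 * H) * h2 / u2) / (q * u1 * h2) = (1 - 2 * H) / (q * u1 * u2) * \<bar>u1 - u2\<bar>"
    using assms by (simp add: field_simps)
  show ?thesis using A unfolding B C D .
qed

lemma Rf_lower:
  assumes "0 < H" "H \<le> 1/2" "q > 0" "u > 0" "h > 0" "Rf H q u h = 0"
  shows "h \<ge> sqrt (2 * H / q)"
proof -
  have "q * u * h\<^sup>2 = (1 - 2 * H) * h + 2 * H * u" using assms(6) unfolding Rf_def by simp
  moreover have "(1 - 2 * H) * h \<ge> 0" using assms by simp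
  ultimately have "q * u * h\<^sup>2 \<ge> 2 * H * u" by linarith
  hence "u * (q * h\<^sup>2) \<ge> u * (2 * H)" by (simp add: algebra_simps)
  hence "q * h\<^sup>2 \<ge> 2 * H" using assms(4) by simp
  hence "h\<^sup>2 \<ge> 2 * H / q" using assms(3) by (simp add: field_simps)
  thus ?thesis using assms(5) by (simp add: real_le_lsqrt)
qed

lemma Rf_upper:
  assumes "0 < H" "H \<le> 1/2" "q > 0" "u > 0" "h > 0" "Rf H q u h = 0"
  shows "h \<le> (1 - 2 * H) / (q * u) + sqrt (2 * H / q)"
proof (rule ccontr)
  define \<alpha> where "\<alpha> = (1 - 2 * H) / (q * u)"
  define \<beta> where "\<beta> = 2 * H / q"
  assume "\<not> ?thesis"
  hence hgt: "h > \<alpha> + sqrt \<beta>" by (simp add: \<alpha>_def \<beta>_def)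
  have al: "\<alpha> \<ge> 0" "\<beta> \<ge> 0" using assms by (auto simp: \<alpha>_def \<beta>_def)
  have eq: "h\<^sup>2 = \<alpha> * h + \<beta>" using assms(6) assms(3,4) unfolding Rf_def \<alpha>_def \<beta>_def
    by (simp add: field_simps power2_eq_square)
  have "h * h > h * (\<alpha> + sqrt \<beta>)" using hgt assms(5) by simp
  moreover have "sqrt \<beta> * h \<ge> sqrt \<beta> * sqrt \<beta>" using hgt al by (intro mult_left_mono) auto
  moreover have "sqrt \<beta> * sqrt \<beta> = \<beta>" using al by simp
  moreover have "h * (\<alpha> + sqrt \<beta>) = \<alpha> * h + sqrt \<beta> * h" by (simp add: algebra_simps)
  ultimately have "h * h > \<alpha> * h + \<beta>" by linarith
  thus False using eq by (simp add: power2_eq_square)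
qed


lemma integral_const_Icc0:
  assumes "0 \<le> y" shows "integral {0..y} (\<lambda>s. c) = y * (c::real)"
  using assms by simp

lemma int_exp:
  fixes la a b C :: real
  assumes "la > 0" "a \<le> b"
  shows "((\<lambda>s. C * exp (la * s)) has_integral (C * exp (la * b) / la - C * exp (la * a) / la)) {a..b}"
proof -
  have "((\<lambda>s. C * exp (la * s)) has_integral ((\<lambda>s. C * exp (la * s) / la) b - (\<lambda>s. C * exp (la * s) / la) a)) {a..b}"
  proof (rule fundamental_theorem_of_calculus)
    show "a \<le> b" by fact
  next
    fix x assume "x \<in> {a..b}"
    have "((\<lambda>s. C * exp (la * s) / la) has_real_derivative (C * (exp (la * x) * (la * 1)) / la)) (at x within {a..b})"
      by (auto intro!: derivative_eq_intros)
    moreover have "C * (exp (la * x) * (la * 1)) / la = C * exp (la * x)" using assms by simp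
    ultimately show "((\<lambda>s. C * exp (la * s) / la) has_vector_derivative C * exp (la * x)) (at x within {a..b})"
      by (simp add: has_real_derivative_iff_has_vector_derivative)
  qed
  thus ?thesis by simp
qed

lemma int_lin:
  fixes y c :: real
  assumes "0 \<le> y"
  shows "((\<lambda>s. 1 + 2 * c * s) has_integral (y + c * y\<^sup>2)) {0..y}"
proof -
  have "((\<lambda>s. 1 + 2 * c * s) has_integral ((\<lambda>s. s + c * s\<^sup>2) y - (\<lambda>s. s + c * s\<^sup>2) 0)) {0..y}"
  proof (rule fundamental_theorem_of_calculus)
    show "0 \<le> y" by fact
  next
    fix x assume "x \<in> {0..y}"
    have "((\<lambda>s. s + c * s\<^sup>2) has_real_derivative (1 + c * (2 * x ^ 1 * 1))) (at x within {0..y})"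
      by (intro derivative_eq_intros) auto
    thus "((\<lambda>s. s + c * s\<^sup>2) has_vector_derivative 1 + 2 * c * x) (at x within {0..y})"
      by (simp add: has_real_derivative_iff_has_vector_derivative algebra_simps)
  qed
  thus ?thesis by simp
qed

lemma weighted_volterra:
  fixes F :: "real \<Rightarrow> real"
  assumes "\<delta> > 0" "la > 0" "L \<ge> 0" "\<kappa>0 \<ge> 0" "M \<ge> 0" "y > 0"
    and contF: "continuous_on {0..y} F"
    and small: "\<And>s. s \<in> {0..y} \<Longrightarrow> s \<le> \<delta> \<Longrightarrow> F s \<le> \<kappa>0 * M * exp (la * s)"
    and big: "\<And>s. s \<in> {0..y} \<Longrightarrow> F s \<le> L * M * exp (la * s)"
  shows "integral {0..y} F \<le> (\<kappa>0 + L / (la * \<delta>)) * M * exp (la * y) * y"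
proof -
  have extra: "0 \<le> L / (la * \<delta>) * M * exp (la * y) * y" using assms by simp
  have intF: "F integrable_on {0..y}" using contF by (rule integrable_continuous_interval)
  show ?thesis
  proof (cases "y \<le> \<delta>")
    case True
    have "integral {0..y} F \<le> integral {0..y} (\<lambda>s. \<kappa>0 * M * exp (la * y))"
    proof (rule integral_le[OF intF])
      show "(\<lambda>s. \<kappa>0 * M * exp (la * y)) integrable_on {0..y}" by (intro integrable_continuous_interval continuous_intros)
      fix s assume s: "s \<in> {0..y}"
      have "F s \<le> \<kappa>0 * M * exp (la * s)" using small s True by auto
      also have "\<dots> \<le> \<kappa>0 * M * exp (la * y)" using s assms
        by (intro mult_left_mono) (auto simp: mult_left_mono)
      finally show "F s \<le> \<kappa>0 * M * exp (la * y)" .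
    qed
    also have "\<dots> = \<kappa>0 * M * exp (la * y) * y" using assms by simp
    finally show ?thesis using extra by (simp add: algebra_simps)
  next
    case False
    hence dy: "\<delta> < y" by simp
    have split: "integral {0..\<delta>} F + integral {\<delta>..y} F = integral {0..y} F"
      using Henstock_Kurzweil_Integration.integral_combine[where a=0 and c=\<delta> and b=y and f=F] assms dy intF by simp
    have intF1: "F integrable_on {0..\<delta>}"
      using contF dy assms by (intro integrable_continuous_interval) (auto elim: continuous_on_subset)
    have intF2: "F integrable_on {\<delta>..y}"
      using contF dy assms by (intro integrable_continuous_interval) (auto elim: continuous_on_subset)
    have I1: "integral {0..\<delta>} F \<le> \<kappa>0 * M * exp (la * y) * y"
    proof -
      have "integral {0..\<delta>} F \<le> integral {0..\<delta>} (\<lambda>s. \<kappa>0 * M * exp (la * y))"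
      proof (rule integral_le[OF intF1])
        show "(\<lambda>s. \<kappa>0 * M * exp (la * y)) integrable_on {0..\<delta>}" by (intro integrable_continuous_interval continuous_intros)
        fix s assume s: "s \<in> {0..\<delta>}"
        have "F s \<le> \<kappa>0 * M * exp (la * s)" using small s dy by auto
        also have "\<dots> \<le> \<kappa>0 * M * exp (la * y)" using s assms dy
          by (intro mult_left_mono) (auto simp: mult_left_mono)
        finally show "F s \<le> \<kappa>0 * M * exp (la * y)" .
      qed
      also have "\<dots> = \<kappa>0 * M * exp (la * y) * \<delta>" using assms by simp
      also have "\<dots> \<le> \<kappa>0 * M * exp (la * y) * y" using assms dy
        by (intro mult_left_mono) auto
      finally show ?thesis .
    qed
    have I2: "integral {\<delta>..y} F \<le> L / (la * \<delta>) * M * exp (la * y) * y"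
    proof -
      have hi: "((\<lambda>s. L * M * exp (la * s)) has_integral (L * M * exp (la * y) / la - L * M * exp (la * \<delta>) / la)) {\<delta>..y}"
        using int_exp[of la \<delta> y "L * M"] assms dy by simp
      have "integral {\<delta>..y} F \<le> integral {\<delta>..y} (\<lambda>s. L * M * exp (la * s))"
        using intF2 hi big assms dy by (intro integral_le) auto
      also have "\<dots> = L * M * exp (la * y) / la - L * M * exp (la * \<delta>) / la"
        using hi by (rule integral_unique)
      also have "\<dots> \<le> L * M * exp (la * y) / la" using assms by simp
      also have "\<dots> = L / (la * \<delta>) * M * exp (la * y) * \<delta>" using assms by (simp add: field_simps)
      also have "\<dots> \<le> L / (la * \<delta>) * M * exp (la * y) * y" using assms dy
        by (intro mult_left_mono) auto
      finally show ?thesis .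
    qed
    show ?thesis using split I1 I2 by (simp add: algebra_simps)
  qed
qed


definition cc :: "real \<Rightarrow> real \<Rightarrow> real" where
  "cc H \<rho> = - 2 * \<rho> / ((2 * H + 1) * (3 + 2 * H))"

lemma cc_neg: "cc H (-\<rho>) = - cc H \<rho>" unfolding cc_def by simp

lemma prod3_near1:
  fixes x y z e :: real
  assumes "\<bar>x - 1\<bar> \<le> e" "\<bar>y - 1\<bar> \<le> e" "\<bar>z - 1\<bar> \<le> e" "0 \<le> e" "e \<le> 1/5"
  shows "\<bar>x * y * z - 1\<bar> \<le> 4 * e"
proof -
  have id: "x * y * z - 1 = (x - 1) * (y * z) + (y - 1) * z + (z - 1)" by (simp add: algebra_simps)
  have y: "\<bar>y\<bar> \<le> 6/5" "\<bar>z\<bar> \<le> 6/5" using assms by auto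
  have yz: "\<bar>y * z\<bar> \<le> 36/25" using y by (simp add: abs_mult mult_mono' [of "\<bar>y\<bar>" "6/5" "\<bar>z\<bar>" "6/5", simplified]) 
  have t1: "\<bar>(x - 1) * (y * z)\<bar> \<le> e * (36/25)"
    unfolding abs_mult using assms(1) yz by (intro mult_mono) auto
  have t2: "\<bar>(y - 1) * z\<bar> \<le> e * (6/5)"
    unfolding abs_mult using assms(2) y by (intro mult_mono) auto
  have "\<bar>x * y * z - 1\<bar> \<le> \<bar>(x - 1) * (y * z)\<bar> + \<bar>(y - 1) * z\<bar> + \<bar>z - 1\<bar>"
    unfolding id by linarith
  also have "\<dots> \<le> e * (36/25) + e * (6/5) + e" using t1 t2 assms(3) by linarith
  also have "\<dots> \<le> 4 * e" using assms(4) by simp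
  finally show ?thesis .
qed

locale hl =
  fixes H \<rho> :: real
  assumes H0: "0 < H" and H1: "H \<le> 1/2" and rho: "\<bar>\<rho>\<bar> < 1"
begin

definition "b = 1 - 2 * H"
definition "a = 2 * H + 1"
definition "c = cc H \<rho>"
definition "q0 = 1 - \<bar>\<rho>\<bar>"
definition "\<alpha> = 2 * \<rho> / a"
definition "\<beta> = 1 / a\<^sup>2"
definition "k0 = \<beta> + 5 * c * \<alpha> + 8 * c\<^sup>2"
definition "k1 = 5 * c * \<beta> + 8 * c\<^sup>2 * \<alpha> + 4 * c ^ 3"
definition "k2 = 8 * c\<^sup>2 * \<beta> + 4 * c ^ 3 * \<alpha>"
definition "k3 = 4 * c ^ 3 * \<beta>"
definition "CP = \<bar>k0\<bar> + \<bar>k1\<bar> + \<bar>k2\<bar> + \<bar>k3\<bar>"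
definition "\<kappa>1 = (1 + b) / 2"
definition "K = 2 * CP / (1 - \<kappa>1)"
definition "\<eta> = (1 - b) / 16"
definition "\<delta> = min 1 (\<eta> / (3 * \<bar>c\<bar> + K + \<bar>\<alpha>\<bar> + \<beta> + 1))"

abbreviation "Q \<equiv> Qf H \<rho>"

lemma a_pos: "a > 0" using H0 by (simp add: a_def)
lemma b_ge: "0 \<le> b" "b < 1" using H0 H1 by (auto simp: b_def)
lemma q0_pos: "q0 > 0" using rho by (simp add: q0_def)
lemma \<beta>_pos: "\<beta> > 0" using a_pos by (simp add: \<beta>_def)
lemma \<kappa>1_lt: "\<kappa>1 < 1" "b < \<kappa>1" "0 < \<kappa>1" using b_ge by (auto simp: \<kappa>1_def)
lemma CP_ge: "CP \<ge> 0" by (simp add: CP_def)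
lemma K_ge: "K \<ge> 0" using CP_ge \<kappa>1_lt by (simp add: K_def)
lemma \<eta>_pos: "\<eta> > 0" "\<eta> \<le> 1/16" using b_ge by (auto simp: \<eta>_def)

lemma \<delta>_pos: "\<delta> > 0" "\<delta> \<le> 1"
proof -
  have "3 * \<bar>c\<bar> + K + \<bar>\<alpha>\<bar> + \<beta> + 1 > 0" using K_ge \<beta>_pos by simp
  thus "\<delta> > 0" "\<delta> \<le> 1" using \<eta>_pos by (auto simp: \<delta>_def)
qed

lemma \<delta>_small: "(3 * \<bar>c\<bar> + K + \<bar>\<alpha>\<bar> + \<beta> + 1) * \<delta> \<le> \<eta>"
proof -
  have p: "3 * \<bar>c\<bar> + K + \<bar>\<alpha>\<bar> + \<beta> + 1 > 0" using K_ge \<beta>_pos by simp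
  have "\<delta> \<le> \<eta> / (3 * \<bar>c\<bar> + K + \<bar>\<alpha>\<bar> + \<beta> + 1)" by (simp add: \<delta>_def)
  thus ?thesis using p by (simp add: field_simps mult.commute)
qed

lemma Q_eq: "Q s = 1 + \<alpha> * s + \<beta> * s\<^sup>2"
  unfolding Qf_def \<alpha>_def \<beta>_def a_def by (simp add: field_simps)

lemma lin_rel: "\<alpha> + c * (3 + 2 * H) = 0"
proof -
  have "c = (- 2 * \<rho> / a) / (3 + 2 * H)" unfolding c_def cc_def a_def by (simp add: divide_divide_eq_left)
  moreover have "3 + 2 * H \<noteq> 0" using H0 by simp
  ultimately have "c * (3 + 2 * H) = - 2 * \<rho> / a" by simp
  thus ?thesis unfolding \<alpha>_def by simp
qed

lemma P_eq: "Rf H (Q s) (1 + c * s) (1 + 2 * c * s) = s\<^sup>2 * (k0 + k1 * s + k2 * s\<^sup>2 + k3 * s ^ 3)"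
proof -
  have "Rf H (Q s) (1 + c * s) (1 + 2 * c * s) = s\<^sup>2 * (k0 + k1 * s + k2 * s\<^sup>2 + k3 * s ^ 3) + s * (\<alpha> + c * (3 + 2 * H))"
    unfolding Rf_def Q_eq k0_def k1_def k2_def k3_def
    by (simp add: algebra_simps power2_eq_square power3_eq_cube)
  thus ?thesis using lin_rel by simp
qed

lemma P_bound:
  assumes "0 \<le> s" "s \<le> 1"
  shows "\<bar>Rf H (Q s) (1 + c * s) (1 + 2 * c * s)\<bar> \<le> CP * s\<^sup>2"
proof -
  have s2: "s\<^sup>2 \<le> 1" "s ^ 3 \<le> 1" using assms by (auto simp: power_le_one)
  have "\<bar>k0 + k1 * s + k2 * s\<^sup>2 + k3 * s ^ 3\<bar> \<le> \<bar>k0\<bar> + \<bar>k1\<bar> * s + \<bar>k2\<bar> * s\<^sup>2 + \<bar>k3\<bar> * s ^ 3"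
  proof -
    have abs4: "\<bar>x1 + x2 + x3 + x4\<bar> \<le> \<bar>x1\<bar> + \<bar>x2\<bar> + \<bar>x3\<bar> + \<bar>x4\<bar>" for x1 x2 x3 x4 :: real
      by (auto split: abs_split)
    have "\<bar>k1 * s\<bar> = \<bar>k1\<bar> * s" "\<bar>k2 * s\<^sup>2\<bar> = \<bar>k2\<bar> * s\<^sup>2" "\<bar>k3 * s ^ 3\<bar> = \<bar>k3\<bar> * s ^ 3"
      using assms by (auto simp: abs_mult)
    thus ?thesis using abs4[of k0 "k1 * s" "k2 * s\<^sup>2" "k3 * s ^ 3"] by simp
  qed
  also have "\<dots> \<le> CP" unfolding CP_def using assms s2
    by (intro add_mono mult_left_le) auto
  finally have "\<bar>k0 + k1 * s + k2 * s\<^sup>2 + k3 * s ^ 3\<bar> \<le> CP" .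
  hence "s\<^sup>2 * \<bar>k0 + k1 * s + k2 * s\<^sup>2 + k3 * s ^ 3\<bar> \<le> s\<^sup>2 * CP" by (intro mult_left_mono) auto
  thus ?thesis unfolding P_eq by (simp add: abs_mult mult.commute)
qed

end

context hl begin

lemma K_rel: "2 * CP + \<kappa>1 * K = K"
  using \<kappa>1_lt unfolding K_def by (simp add: field_simps)

lemma \<eta>_rel: "\<kappa>1 - b = 8 * \<eta>"
  unfolding \<kappa>1_def \<eta>_def by simp

lemma near0:
  assumes "0 \<le> s" "s \<le> \<delta>"
  shows "\<bar>Q s - 1\<bar> \<le> \<eta>" "\<bar>(1 + 2 * c * s) - 1\<bar> \<le> \<eta>"
    "\<bar>u - 1 - c * s\<bar> \<le> K * s\<^sup>2 \<Longrightarrow> \<bar>u - 1\<bar> \<le> \<eta>"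
proof -
  have s1: "s \<le> 1" using assms \<delta>_pos by simp
  have ss: "s\<^sup>2 \<le> s" using assms s1 by (simp add: power2_eq_square mult_left_le_one_le)
  have dd: "(3 * \<bar>c\<bar> + K + \<bar>\<alpha>\<bar> + \<beta> + 1) * s \<le> \<eta>"
  proof -
    have "(3 * \<bar>c\<bar> + K + \<bar>\<alpha>\<bar> + \<beta> + 1) * s \<le> (3 * \<bar>c\<bar> + K + \<bar>\<alpha>\<bar> + \<beta> + 1) * \<delta>"
      using assms K_ge \<beta>_pos by (intro mult_left_mono) auto
    thus ?thesis using \<delta>_small by linarith
  qed
  have dparts: "\<bar>\<alpha>\<bar> * s + \<beta> * s \<le> \<eta>" "2 * \<bar>c\<bar> * s \<le> \<eta>" "\<bar>c\<bar> * s + K * s \<le> \<eta>"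
  proof -
    have ex: "(3 * \<bar>c\<bar> + K + \<bar>\<alpha>\<bar> + \<beta> + 1) * s = \<bar>c\<bar> * s + \<bar>c\<bar> * s + \<bar>c\<bar> * s + K * s + \<bar>\<alpha>\<bar> * s + \<beta> * s + s"
      by (simp add: algebra_simps)
    have nn: "\<bar>c\<bar> * s \<ge> 0" "K * s \<ge> 0" "\<bar>\<alpha>\<bar> * s \<ge> 0" "\<beta> * s \<ge> 0"
      using assms K_ge \<beta>_pos by auto
    show "\<bar>\<alpha>\<bar> * s + \<beta> * s \<le> \<eta>" "2 * \<bar>c\<bar> * s \<le> \<eta>" "\<bar>c\<bar> * s + K * s \<le> \<eta>"
      using dd ex nn assms by linarith+
  qed
  have "\<bar>Q s - 1\<bar> = \<bar>\<alpha> * s + \<beta> * s\<^sup>2\<bar>" unfolding Q_eq by simp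
  also have "\<dots> \<le> \<bar>\<alpha>\<bar> * s + \<beta> * s"
  proof -
    have "\<bar>\<alpha> * s + \<beta> * s\<^sup>2\<bar> \<le> \<bar>\<alpha> * s\<bar> + \<bar>\<beta> * s\<^sup>2\<bar>" by (rule abs_triangle_ineq)
    moreover have "\<bar>\<alpha> * s\<bar> = \<bar>\<alpha>\<bar> * s" using assms by (simp add: abs_mult)
    moreover have "\<bar>\<beta> * s\<^sup>2\<bar> = \<beta> * s\<^sup>2" using \<beta>_pos by (simp add: abs_mult)
    moreover have "\<beta> * s\<^sup>2 \<le> \<beta> * s" using ss \<beta>_pos by simp
    ultimately show ?thesis by linarith
  qed
  also have "\<dots> \<le> \<eta>" using dd assms K_ge \<beta>_pos
    using dparts by linarith
  finally show "\<bar>Q s - 1\<bar> \<le> \<eta>" .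
  have "\<bar>(1 + 2 * c * s) - 1\<bar> = 2 * \<bar>c\<bar> * s" using assms by (simp add: abs_mult)
  also have "\<dots> \<le> \<eta>" using dd assms K_ge \<beta>_pos
    using dparts by linarith
  finally show "\<bar>(1 + 2 * c * s) - 1\<bar> \<le> \<eta>" .
  assume u: "\<bar>u - 1 - c * s\<bar> \<le> K * s\<^sup>2"
  have "\<bar>u - 1\<bar> \<le> \<bar>c\<bar> * s + K * s"
  proof -
    have "\<bar>u - 1\<bar> \<le> \<bar>u - 1 - c * s\<bar> + \<bar>c * s\<bar>" by linarith
    moreover have "\<bar>c * s\<bar> = \<bar>c\<bar> * s" using assms by (simp add: abs_mult)
    moreover have "K * s\<^sup>2 \<le> K * s" using ss K_ge by (simp add: mult_left_mono)
    ultimately show ?thesis using u by linarith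
  qed
  also have "\<dots> \<le> \<eta>" using dd assms K_ge \<beta>_pos
    using dparts by linarith
  finally show "\<bar>u - 1\<bar> \<le> \<eta>" .
qed

lemma box_facts:
  assumes "0 \<le> s" "s \<le> \<delta>" "\<bar>u - 1 - c * s\<bar> \<le> K * s\<^sup>2"
  shows "u \<ge> 1/2" "1 + 2 * c * s > 0" "Q s * u * (1 + 2 * c * s) \<ge> 1/2"
    "\<bar>Q s * (1 + 2 * c * s)\<^sup>2 - 2 * H\<bar> \<le> \<kappa>1 * (Q s * u * (1 + 2 * c * s))"
proof -
  have e: "\<bar>Q s - 1\<bar> \<le> \<eta>" "\<bar>(1 + 2 * c * s) - 1\<bar> \<le> \<eta>" "\<bar>u - 1\<bar> \<le> \<eta>"
    using near0 assms by auto
  show "u \<ge> 1/2" "1 + 2 * c * s > 0" using e \<eta>_pos by auto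
  have p1: "\<bar>Q s * u * (1 + 2 * c * s) - 1\<bar> \<le> 4 * \<eta>"
    using prod3_near1[OF e(1) e(3) e(2)] \<eta>_pos by simp
  thus "Q s * u * (1 + 2 * c * s) \<ge> 1/2" using \<eta>_pos by linarith
  have p2: "\<bar>Q s * (1 + 2 * c * s) * (1 + 2 * c * s) - 1\<bar> \<le> 4 * \<eta>"
    using prod3_near1[OF e(1) e(2) e(2)] \<eta>_pos by simp
  have "\<bar>Q s * (1 + 2 * c * s)\<^sup>2 - 2 * H\<bar> \<le> 4 * \<eta> + b"
  proof -
    have "Q s * (1 + 2 * c * s)\<^sup>2 = Q s * (1 + 2 * c * s) * (1 + 2 * c * s)" by (simp add: power2_eq_square)
    thus ?thesis using p2 b_ge unfolding b_def by linarith
  qed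
  also have "\<dots> = \<kappa>1 - 4 * \<eta>" using \<eta>_rel by linarith
  also have "\<dots> \<le> \<kappa>1 * (1 - 4 * \<eta>)" using \<kappa>1_lt \<eta>_pos by (simp add: algebra_simps)
  also have "\<dots> \<le> \<kappa>1 * (Q s * u * (1 + 2 * c * s))"
  proof -
    have "1 - 4 * \<eta> \<le> Q s * u * (1 + 2 * c * s)" using p1 by linarith
    thus ?thesis using \<kappa>1_lt by (intro mult_left_mono) simp_all
  qed
  finally show "\<bar>Q s * (1 + 2 * c * s)\<^sup>2 - 2 * H\<bar> \<le> \<kappa>1 * (Q s * u * (1 + 2 * c * s))" .
qed

lemma contr0:
  assumes "0 \<le> s" "s \<le> \<delta>" "\<bar>u1 - 1 - c * s\<bar> \<le> K * s\<^sup>2" "\<bar>u2 - 1 - c * s\<bar> \<le> K * s\<^sup>2"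
  shows "b / (Q s * u1 * u2) \<le> \<kappa>1"
proof -
  have e: "\<bar>Q s - 1\<bar> \<le> \<eta>" "\<bar>u1 - 1\<bar> \<le> \<eta>" "\<bar>u2 - 1\<bar> \<le> \<eta>"
    using near0 assms by auto
  have p1: "\<bar>Q s * u1 * u2 - 1\<bar> \<le> 4 * \<eta>"
    using prod3_near1[OF e(1) e(2) e(3)] \<eta>_pos by simp
  have pos: "Q s * u1 * u2 > 0" using p1 \<eta>_pos by linarith
  have "b = \<kappa>1 - 8 * \<eta>" using \<eta>_rel by linarith
  also have "\<dots> \<le> \<kappa>1 * (1 - 4 * \<eta>)" using \<kappa>1_lt \<eta>_pos by (simp add: algebra_simps)
  also have "\<dots> \<le> \<kappa>1 * (Q s * u1 * u2)"
  proof -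
    have "1 - 4 * \<eta> \<le> Q s * u1 * u2" using p1 by linarith
    thus ?thesis using \<kappa>1_lt by (intro mult_left_mono) simp_all
  qed
  finally show ?thesis using pos by (simp add: divide_le_eq)
qed

lemma h_est:
  assumes "0 \<le> s" "s \<le> \<delta>" "\<bar>u - 1 - c * s\<bar> \<le> K * s\<^sup>2" "h > 0" "Rf H (Q s) u h = 0"
  shows "\<bar>h - (1 + 2 * c * s)\<bar> \<le> K * s\<^sup>2"
proof -
  note bf = box_facts[OF assms(1-3)]
  define hs where "hs = 1 + 2 * c * s"
  define D where "D = Q s * u * hs"
  have Dpos: "D \<ge> 1/2" using bf by (simp add: D_def hs_def)
  have Qp: "Q s > 0" using Qf_pos H0 rho by auto
  have up: "u > 0" using bf by simp
  have "\<bar>h - hs\<bar> \<le> \<bar>Rf H (Q s) u hs\<bar> / (Q s * u * hs)"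
    using Rf_pert[OF H0 H1 Qp up assms(4)] bf assms(5) by (simp add: hs_def)
  also have "Rf H (Q s) u hs = Rf H (Q s) (1 + c * s) hs + (u - (1 + c * s)) * (Q s * hs\<^sup>2 - 2 * H)"
    unfolding Rf_def by (simp add: algebra_simps)
  finally have A: "\<bar>h - hs\<bar> \<le> \<bar>Rf H (Q s) (1 + c * s) hs + (u - (1 + c * s)) * (Q s * hs\<^sup>2 - 2 * H)\<bar> / D"
    by (simp add: D_def)
  have s1: "s \<le> 1" using assms \<delta>_pos by simp
  have B: "\<bar>Rf H (Q s) (1 + c * s) hs\<bar> \<le> CP * s\<^sup>2" using P_bound[OF assms(1) s1] by (simp add: hs_def)
  have C: "\<bar>(u - (1 + c * s)) * (Q s * hs\<^sup>2 - 2 * H)\<bar> \<le> K * s\<^sup>2 * (\<kappa>1 * D)"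
  proof -
    have u1: "\<bar>u - (1 + c * s)\<bar> \<le> K * s\<^sup>2" using assms(3) by (simp add: algebra_simps)
    have u2: "\<bar>Q s * hs\<^sup>2 - 2 * H\<bar> \<le> \<kappa>1 * D" using bf(4) by (simp add: D_def hs_def)
    have "\<bar>u - (1 + c * s)\<bar> * \<bar>Q s * hs\<^sup>2 - 2 * H\<bar> \<le> K * s\<^sup>2 * (\<kappa>1 * D)"
      by (rule mult_mono[OF u1 u2]) (use K_ge in simp_all)
    thus ?thesis by (simp add: abs_mult)
  qed
  have "\<bar>Rf H (Q s) (1 + c * s) hs + (u - (1 + c * s)) * (Q s * hs\<^sup>2 - 2 * H)\<bar> \<le> CP * s\<^sup>2 + K * s\<^sup>2 * (\<kappa>1 * D)"
  proof -
    have "\<bar>Rf H (Q s) (1 + c * s) hs + (u - (1 + c * s)) * (Q s * hs\<^sup>2 - 2 * H)\<bar> \<le> \<bar>Rf H (Q s) (1 + c * s) hs\<bar> + \<bar>(u - (1 + c * s)) * (Q s * hs\<^sup>2 - 2 * H)\<bar>"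
      by (rule abs_triangle_ineq)
    thus ?thesis using B C by linarith
  qed
  hence "\<bar>h - hs\<bar> \<le> (CP * s\<^sup>2 + K * s\<^sup>2 * (\<kappa>1 * D)) / D"
  proof -
    have "\<bar>Rf H (Q s) (1 + c * s) hs + (u - (1 + c * s)) * (Q s * hs\<^sup>2 - 2 * H)\<bar> / D \<le> (CP * s\<^sup>2 + K * s\<^sup>2 * (\<kappa>1 * D)) / D"
      using \<open>\<bar>Rf H (Q s) (1 + c * s) hs + _\<bar> \<le> _\<close> Dpos by (intro divide_right_mono) auto
    thus ?thesis using A by linarith
  qed
  also have "\<dots> = CP * s\<^sup>2 / D + \<kappa>1 * K * s\<^sup>2" using Dpos by (simp add: field_simps)
  also have "\<dots> \<le> 2 * CP * s\<^sup>2 + \<kappa>1 * K * s\<^sup>2"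
  proof -
    have "CP * s\<^sup>2 / D \<le> CP * s\<^sup>2 / (1/2)" using Dpos CP_ge
      by (intro divide_left_mono) auto
    thus ?thesis by simp
  qed
  also have "\<dots> = (2 * CP + \<kappa>1 * K) * s\<^sup>2" by (simp add: algebra_simps)
  also have "\<dots> = K * s\<^sup>2" using K_rel by simp
  finally show ?thesis by (simp add: hs_def)
qed

end

lemma int_deriv:
  fixes f :: "real \<Rightarrow> real"
  assumes "continuous_on {0..} f" "y > 0"
  shows "((\<lambda>t. integral {0..t} f) has_real_derivative f y) (at y)"
proof -
  have c: "continuous_on {0..y+1} f" using assms(1) by (rule continuous_on_subset) auto
  have "((\<lambda>t. integral {0..t} f) has_real_derivative f y) (at y within {0..y+1})"
    using integral_has_real_derivative[OF c, of y] assms by simp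
  moreover have "y \<in> interior {0..y+1}" using assms by simp
  hence "at y within {0..y+1} = at y" by (rule at_within_interior)
  ultimately show ?thesis by simp
qed

lemma isCont_at0_bound:
  fixes f :: "real \<Rightarrow> real"
  assumes "d > 0" "C \<ge> 0" "\<And>y. \<bar>y\<bar> < d \<Longrightarrow> \<bar>f y - f 0\<bar> \<le> C * \<bar>y\<bar>"
  shows "isCont f 0"
proof -
  have ev: "eventually (\<lambda>y. norm (f y - f 0) \<le> C * \<bar>y\<bar>) (at 0)"
    using assms(1,3) unfolding eventually_at by (intro exI[of _ d]) (auto simp: dist_real_def)
  have "((\<lambda>y. C * \<bar>y\<bar>) \<longlongrightarrow> C * \<bar>0\<bar>) (at (0::real))" by (intro tendsto_intros)
  hence "((\<lambda>y. C * \<bar>y\<bar>) \<longlongrightarrow> 0) (at (0::real))" by simp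
  from Lim_null_comparison[OF ev this] have "((\<lambda>y. f y - f 0) \<longlongrightarrow> 0) (at 0)" .
  thus ?thesis unfolding isCont_def by (simp add: LIM_zero_iff)
qed

lemma continuous_eval_bcontfun:
  "continuous_on UNIV (\<lambda>v::('a::topological_space \<Rightarrow>\<^sub>C real). apply_bcontfun v y)"
proof -
  have "1-lipschitz_on UNIV (\<lambda>v::('a \<Rightarrow>\<^sub>C real). apply_bcontfun v y)"
    unfolding lipschitz_on_def using dist_bounded by auto
  thus ?thesis by (rule lipschitz_on_continuous_on)
qed

context hl begin

definition m :: "real \<Rightarrow> real" where "m y = sqrt (H * q0 / Q y)"
definition "Hmax = 2 + b / (q0 * sqrt H) + sqrt (2 * H / q0)"
definition "L = b / (H * q0)"
definition "la = 4 * L / (\<delta> * (1 - \<kappa>1)) + 1"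
definition \<omega> :: "real \<Rightarrow> real" where "\<omega> y = exp (la * max 0 y)"
definition "\<kappa> = \<kappa>1 + L / (la * \<delta>)"

lemma Qpos: "Q s > 0" "Q s \<ge> q0" using Qf_pos[OF H0 rho] by (auto simp: q0_def)

lemma L_ge: "L \<ge> 0" using b_ge H0 q0_pos by (simp add: L_def)
lemma la_pos: "la > 0" using L_ge \<delta>_pos \<kappa>1_lt by (simp add: la_def add_nonneg_pos)

lemma \<kappa>_bounds: "0 \<le> \<kappa>" "\<kappa> < 1"
proof -
  have p: "1 - \<kappa>1 > 0" using \<kappa>1_lt by simp
  have "la * \<delta> \<ge> 4 * L / (1 - \<kappa>1)"
  proof -
    have "la * \<delta> = 4 * L / (1 - \<kappa>1) + \<delta>" unfolding la_def using \<delta>_pos p by (simp add: field_simps)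
    thus ?thesis using \<delta>_pos by simp
  qed
  hence "L \<le> la * \<delta> * (1 - \<kappa>1) / 4" using p by (simp add: field_simps)
  hence "L / (la * \<delta>) \<le> (1 - \<kappa>1) / 4" using la_pos \<delta>_pos by (simp add: field_simps)
  moreover have "(1 - \<kappa>1) / 4 < 1 - \<kappa>1" using p by simp
  ultimately show "\<kappa> < 1" unfolding \<kappa>_def by linarith
  show "0 \<le> \<kappa>" unfolding \<kappa>_def using \<kappa>1_lt L_ge la_pos \<delta>_pos by simp
qed

lemma \<omega>_props: "\<omega> y > 0" "\<omega> y \<ge> 1" "y \<le> 0 \<Longrightarrow> \<omega> y = 1" "y \<ge> 0 \<Longrightarrow> \<omega> y = exp (la * y)"
  "continuous_on UNIV \<omega>"
  using la_pos by (auto simp: \<omega>_def intro!: continuous_intros)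

lemma m_props: "m y > 0" "m y \<le> 3/4" "Q y * (m y)\<^sup>2 = H * q0"
proof -
  have p: "H * q0 / Q y > 0" using H0 q0_pos Qpos by simp
  thus "m y > 0" by (simp add: m_def)
  show "Q y * (m y)\<^sup>2 = H * q0" using p Qpos(1)[of y] by (simp add: m_def)
  have "H * q0 / Q y \<le> H * q0 / q0" using H0 q0_pos Qpos by (intro divide_left_mono) auto
  also have "\<dots> \<le> (3/4)\<^sup>2" using q0_pos H1 by (simp add: power2_eq_square)
  finally have "H * q0 / Q y \<le> (3/4)\<^sup>2" .
  from real_sqrt_le_mono[OF this] show "m y \<le> 3/4" unfolding m_def by simp
qed

lemma h_lower:
  assumes "0 \<le> s" "s \<le> y" "u > 0" "h > 0" "Rf H (Q s) u h = 0"
  shows "h \<ge> m y"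
proof -
  have "h \<ge> sqrt (2 * H / Q s)" using Rf_lower[OF H0 H1 Qpos(1) assms(3-5)] .
  moreover have "H * q0 / Q y \<le> 2 * H / Q s"
  proof -
    have "Q s \<le> 2 * Q y / q0" using Qf_mono_bound[OF H0 rho assms(1,2)] by (simp add: q0_def)
    hence "Q s * q0 \<le> 2 * Q y" using q0_pos by (simp add: field_simps)
    hence "H * (Q s * q0) \<le> H * (2 * Q y)" using H0 by simp
    thus ?thesis using Qpos[of s] Qpos[of y] by (simp add: field_simps)
  qed
  hence "m y \<le> sqrt (2 * H / Q s)" unfolding m_def by simp
  ultimately show ?thesis by linarith
qed

lemma h_upper:
  assumes "0 \<le> s" "u \<ge> m s" "h > 0" "Rf H (Q s) u h = 0"
  shows "h \<le> Hmax"
proof -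
  have up: "u > 0" using m_props(1)[of s] assms by linarith
  have "h \<le> b / (Q s * u) + sqrt (2 * H / Q s)" using Rf_upper[OF H0 H1 Qpos(1) up assms(3,4)] by (simp add: b_def)
  also have "b / (Q s * u) \<le> b / (q0 * sqrt H)"
  proof -
    have "Q s * m s = sqrt (Q s * (H * q0))"
    proof -
      have "(Q s * m s)\<^sup>2 = Q s * (Q s * (m s)\<^sup>2)" by (simp add: power2_eq_square algebra_simps)
      hence "(Q s * m s)\<^sup>2 = Q s * (H * q0)" using m_props(3)[of s] by simp
      moreover have "Q s * m s \<ge> 0" using Qpos m_props by (simp add: less_imp_le)
      ultimately show ?thesis by (metis real_sqrt_unique)
    qed
    also have "\<dots> \<ge> sqrt (q0 * (H * q0))" using Qpos H0 q0_pos by (simp add: mult_right_mono)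
    also have "sqrt (q0 * (H * q0)) = q0 * sqrt H" using q0_pos H0
      by (simp add: real_sqrt_mult power2_eq_square[symmetric] mult.commute mult.left_commute)
    finally have "q0 * sqrt H \<le> Q s * m s" .
    also have "\<dots> \<le> Q s * u" using assms Qpos by simp
    finally have "q0 * sqrt H \<le> Q s * u" .
    moreover have "q0 * sqrt H > 0" using q0_pos H0 by simp
    ultimately show ?thesis using b_ge by (intro divide_left_mono) auto
  qed
  also have "sqrt (2 * H / Q s) \<le> sqrt (2 * H / q0)"
    using Qpos H0 q0_pos by (simp add: frac_le)
  finally show ?thesis unfolding Hmax_def by linarith
qed

lemma lip_glob:
  assumes "u1 \<ge> m s" "u2 \<ge> m s"
  shows "b / (Q s * u1 * u2) \<le> L"
proof -
  have "H * q0 = Q s * m s * m s" using m_props(3)[of s] by (simp add: power2_eq_square mult.assoc)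
  also have "\<dots> \<le> Q s * u1 * u2"
  proof -
    have mp: "m s > 0" by (rule m_props)
    have qp: "Q s > 0" by (rule Qpos)
    have u1p: "u1 > 0" using mp assms by linarith
    have a1: "Q s * m s \<le> Q s * u1" using assms qp by simp
    have "Q s * m s * m s \<le> Q s * u1 * u2"
      by (rule mult_mono[OF a1 assms(2)]) (use qp u1p mp in simp_all)
    thus ?thesis .
  qed
  finally have "H * q0 \<le> Q s * u1 * u2" .
  moreover have "H * q0 > 0" using H0 q0_pos by simp
  ultimately show ?thesis unfolding L_def using b_ge by (intro divide_left_mono) auto
qed

lemma Q_cont: "continuous_on S Q"
proof -
  have "2 * H + 1 \<noteq> 0" using H0 by simp
  thus ?thesis unfolding Qf_def by (intro continuous_intros) auto
qed

lemma Phi_cont: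
  assumes "continuous_on S u" "\<And>s. s \<in> S \<Longrightarrow> u s > 0"
  shows "continuous_on S (\<lambda>s. Phi H (Q s) (u s))"
proof -
  have num: "continuous_on S (\<lambda>s. (1 - 2 * H) + sqrt ((1 - 2 * H)\<^sup>2 + 8 * H * Q s * (u s)\<^sup>2))"
    by (intro continuous_intros Q_cont assms(1))
  have den: "continuous_on S (\<lambda>s. 2 * Q s * u s)"
    by (intro continuous_intros Q_cont assms(1))
  have nz: "\<forall>s\<in>S. 2 * Q s * u s \<noteq> 0" using assms(2) Qpos(1) by (metis mult_eq_0_iff order_less_irrefl zero_neq_numeral)
  show ?thesis unfolding Phi_def using continuous_on_divide[OF num den] nz by blast
qed

end

context hl begin

definition Cset :: "(real \<Rightarrow>\<^sub>C real) set" where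
  "Cset = {v. (\<forall>y. y \<le> 0 \<longrightarrow> apply_bcontfun v y = 1) \<and>
     (\<forall>y. 0 \<le> y \<longrightarrow> m y \<le> \<omega> y * apply_bcontfun v y \<and> \<omega> y * apply_bcontfun v y \<le> Hmax) \<and>
     (\<forall>y. 0 \<le> y \<and> y \<le> \<delta> \<longrightarrow> \<bar>\<omega> y * apply_bcontfun v y - 1 - c * y\<bar> \<le> K * y\<^sup>2)}"

definition uf :: "(real \<Rightarrow>\<^sub>C real) \<Rightarrow> real \<Rightarrow> real" where
  "uf v y = \<omega> y * apply_bcontfun v y"
definition hf :: "(real \<Rightarrow>\<^sub>C real) \<Rightarrow> real \<Rightarrow> real" where
  "hf v s = Phi H (Q s) (uf v s)"
definition Sf :: "(real \<Rightarrow>\<^sub>C real) \<Rightarrow> real \<Rightarrow> real" where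
  "Sf v y = (if y \<le> 0 then 1 else integral {0..y} (hf v) / y)"
definition Tfun :: "(real \<Rightarrow>\<^sub>C real) \<Rightarrow> real \<Rightarrow> real" where
  "Tfun v y = Sf v y / \<omega> y"
definition Tf :: "(real \<Rightarrow>\<^sub>C real) \<Rightarrow> (real \<Rightarrow>\<^sub>C real)" where
  "Tf v = Bcontfun (Tfun v)"

lemma Hmax_ge: "Hmax \<ge> 2"
  using b_ge q0_pos H0 unfolding Hmax_def by simp

lemma Cset_props:
  assumes "v \<in> Cset"
  shows "y \<le> 0 \<Longrightarrow> uf v y = 1"
    "0 \<le> y \<Longrightarrow> m y \<le> uf v y"
    "0 \<le> y \<Longrightarrow> uf v y \<le> Hmax"
    "0 \<le> y \<Longrightarrow> y \<le> \<delta> \<Longrightarrow> \<bar>uf v y - 1 - c * y\<bar> \<le> K * y\<^sup>2"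
    "continuous_on UNIV (uf v)"
    "0 \<le> y \<Longrightarrow> uf v y > 0"
proof -
  show "y \<le> 0 \<Longrightarrow> uf v y = 1" using assms \<omega>_props(3) by (simp add: Cset_def uf_def)
  show "0 \<le> y \<Longrightarrow> m y \<le> uf v y" using assms by (simp add: Cset_def uf_def)
  show "0 \<le> y \<Longrightarrow> uf v y \<le> Hmax" using assms by (simp add: Cset_def uf_def)
  show "0 \<le> y \<Longrightarrow> y \<le> \<delta> \<Longrightarrow> \<bar>uf v y - 1 - c * y\<bar> \<le> K * y\<^sup>2" using assms by (simp add: Cset_def uf_def)
  show "continuous_on UNIV (uf v)" unfolding uf_def using \<omega>_props(5)
    by (intro continuous_intros) auto
  show "0 \<le> y \<Longrightarrow> uf v y > 0" using assms m_props(1)[of y] by (simp add: Cset_def uf_def) (meson less_le_trans)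
qed

lemma hf_props:
  assumes "v \<in> Cset"
  shows "0 \<le> s \<Longrightarrow> hf v s > 0"
    "0 \<le> s \<Longrightarrow> Rf H (Q s) (uf v s) (hf v s) = 0"
    "continuous_on {0..} (hf v)"
    "0 \<le> s \<Longrightarrow> s \<le> y \<Longrightarrow> m y \<le> hf v s"
    "0 \<le> s \<Longrightarrow> hf v s \<le> Hmax"
    "0 \<le> s \<Longrightarrow> s \<le> \<delta> \<Longrightarrow> \<bar>hf v s - (1 + 2 * c * s)\<bar> \<le> K * s\<^sup>2"
proof -
  note cp = Cset_props[OF assms]
  show p: "0 \<le> s \<Longrightarrow> hf v s > 0" unfolding hf_def using Phi_props(1)[OF H0 H1 Qpos(1) cp(6)] .
  show r: "0 \<le> s \<Longrightarrow> Rf H (Q s) (uf v s) (hf v s) = 0" unfolding hf_def using Phi_props(2)[OF H0 H1 Qpos(1) cp(6)] .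
  show "continuous_on {0..} (hf v)" unfolding hf_def
    by (rule Phi_cont) (use cp in \<open>auto intro: continuous_on_subset\<close>)
  show "0 \<le> s \<Longrightarrow> s \<le> y \<Longrightarrow> m y \<le> hf v s" using h_lower cp(6) p r by blast
  show "0 \<le> s \<Longrightarrow> hf v s \<le> Hmax" using h_upper cp(2) p r by blast
  show "0 \<le> s \<Longrightarrow> s \<le> \<delta> \<Longrightarrow> \<bar>hf v s - (1 + 2 * c * s)\<bar> \<le> K * s\<^sup>2"
    using h_est cp(4) p r by blast
qed

lemma hf_integrable:
  assumes "v \<in> Cset" "0 \<le> y"
  shows "hf v integrable_on {0..y}"
  using hf_props(3)[OF assms(1)] by (intro integrable_continuous_interval) (auto elim: continuous_on_subset)

lemma Sf_bounds:
  assumes "v \<in> Cset" "0 \<le> y"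
  shows "m y \<le> Sf v y" "Sf v y \<le> Hmax" "y \<le> \<delta> \<Longrightarrow> \<bar>Sf v y - 1 - c * y\<bar> \<le> K * y\<^sup>2"
proof -
  note hp = hf_props[OF assms(1)]
  have "m y \<le> Sf v y \<and> Sf v y \<le> Hmax"
  proof (cases "y = 0")
    case True thus ?thesis using m_props(2)[of y] Hmax_ge by (simp add: Sf_def)
  next
    case False
    hence yp: "y > 0" using assms by simp
    have I: "hf v integrable_on {0..y}" by (rule hf_integrable) (use assms in auto)
    have "integral {0..y} (\<lambda>s. m y) \<le> integral {0..y} (hf v)"
      by (rule integral_le) (use I hp(4) in auto)
    hence lo: "y * m y \<le> integral {0..y} (hf v)" using yp by simp
    have "integral {0..y} (hf v) \<le> integral {0..y} (\<lambda>s. Hmax)"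
      by (rule integral_le) (use I hp(5) in auto)
    hence hi: "integral {0..y} (hf v) \<le> y * Hmax" using yp by simp
    have "Sf v y = integral {0..y} (hf v) / y" using yp by (simp add: Sf_def)
    hence e: "integral {0..y} (hf v) = y * Sf v y" using yp by simp
    have "y * m y \<le> y * Sf v y" "y * Sf v y \<le> y * Hmax" using lo hi unfolding e by auto
    thus ?thesis using yp by (simp add: mult_le_cancel_left_pos)
  qed
  thus "m y \<le> Sf v y" "Sf v y \<le> Hmax" by auto
  assume yd: "y \<le> \<delta>"
  show "\<bar>Sf v y - 1 - c * y\<bar> \<le> K * y\<^sup>2"
  proof (cases "y = 0")
    case True thus ?thesis by (simp add: Sf_def)
  next
    case False
    hence yp: "y > 0" using assms by simp
    have I: "hf v integrable_on {0..y}" by (rule hf_integrable) (use assms in auto)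
    have hd: "((\<lambda>s. hf v s - (1 + 2 * c * s)) has_integral (integral {0..y} (hf v) - (y + c * y\<^sup>2))) {0..y}"
      by (rule has_integral_diff[OF _ int_lin]) (use I assms in auto)
    have I2: "(\<lambda>s. hf v s - (1 + 2 * c * s)) integrable_on {0..y}" using hd by blast
    have "\<bar>integral {0..y} (hf v) - (y + c * y\<^sup>2)\<bar> = norm (integral {0..y} (\<lambda>s. hf v s - (1 + 2 * c * s)))"
      using hd by (simp add: integral_unique)
    also have "\<dots> \<le> integral {0..y} (\<lambda>s. K * y\<^sup>2)"
    proof (rule integral_norm_bound_integral[OF I2])
      show "(\<lambda>s. K * y\<^sup>2) integrable_on {0..y}" by (intro integrable_continuous_interval continuous_intros)
      fix s assume s: "s \<in> {0..y}"
      have "\<bar>hf v s - (1 + 2 * c * s)\<bar> \<le> K * s\<^sup>2" using hp(6) s yd by auto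
      also have "\<dots> \<le> K * y\<^sup>2" using s K_ge by (intro mult_left_mono power_mono) auto
      finally show "norm (hf v s - (1 + 2 * c * s)) \<le> K * y\<^sup>2" by simp
    qed
    also have "\<dots> = y * (K * y\<^sup>2)" using yp by simp
    finally have A: "\<bar>integral {0..y} (hf v) - (y + c * y\<^sup>2)\<bar> \<le> y * (K * y\<^sup>2)" .
    have "Sf v y - 1 - c * y = (integral {0..y} (hf v) - (y + c * y\<^sup>2)) / y"
      using yp by (simp add: Sf_def field_simps power2_eq_square)
    hence "\<bar>Sf v y - 1 - c * y\<bar> = \<bar>integral {0..y} (hf v) - (y + c * y\<^sup>2)\<bar> / y" using yp by simp
    also have "\<dots> \<le> y * (K * y\<^sup>2) / y" using A yp by (intro divide_right_mono) auto
    also have "\<dots> = K * y\<^sup>2" using yp by simp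
    finally show ?thesis .
  qed
qed

lemma Sf_cont:
  assumes "v \<in> Cset"
  shows "continuous_on UNIV (Sf v)"
proof (intro continuous_at_imp_continuous_on ballI)
  fix y :: real
  note hp = hf_props[OF assms]
  consider "y < 0" | "y = 0" | "y > 0" by linarith
  thus "isCont (Sf v) y"
  proof cases
    case 1
    have "eventually (\<lambda>t. Sf v t = 1) (nhds y)"
      using eventually_nhds_in_open[of "{..<0}" y] 1 by (auto elim!: eventually_mono simp: Sf_def)
    thus ?thesis by (subst isCont_cong) auto
  next
    case 3
    have ev: "eventually (\<lambda>t. Sf v t = integral {0..t} (hf v) / t) (nhds y)"
      using eventually_nhds_in_open[of "{0<..}" y] 3 by (auto elim!: eventually_mono simp: Sf_def)
    have "isCont (\<lambda>t. integral {0..t} (hf v)) y"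
      using DERIV_continuous[OF int_deriv[OF hp(3) 3]] by simp
    hence "isCont (\<lambda>t. integral {0..t} (hf v) / t) y" using 3 by (intro continuous_intros) auto
    thus ?thesis using ev by (subst isCont_cong) auto
  next
    case 2
    have "isCont (Sf v) 0"
    proof (rule isCont_at0_bound[of \<delta> "\<bar>c\<bar> + K"])
      show "\<delta> > 0" "\<bar>c\<bar> + K \<ge> 0" using \<delta>_pos K_ge by auto
      fix t :: real assume t: "\<bar>t\<bar> < \<delta>"
      show "\<bar>Sf v t - Sf v 0\<bar> \<le> (\<bar>c\<bar> + K) * \<bar>t\<bar>"
      proof (cases "t \<le> 0")
        case True
        have "0 \<le> (\<bar>c\<bar> + K) * \<bar>t\<bar>" using K_ge by simp
        moreover have "Sf v t = Sf v 0" using True by (simp add: Sf_def)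
        ultimately show ?thesis by simp
      next
        case False
        hence tp: "t > 0" by simp
        have "\<bar>Sf v t - 1 - c * t\<bar> \<le> K * t\<^sup>2" using Sf_bounds(3)[OF assms, of t] t tp by simp
        moreover have "K * t\<^sup>2 \<le> K * t"
        proof -
          have "t \<le> 1" using t \<delta>_pos by simp
          hence "t * t \<le> t" using tp by (simp add: mult_left_le_one_le)
          thus ?thesis using K_ge by (simp add: power2_eq_square mult_left_mono)
        qed
        moreover have "\<bar>c * t\<bar> = \<bar>c\<bar> * t" using tp by (simp add: abs_mult)
        moreover have "Sf v 0 = 1" by (simp add: Sf_def)
        ultimately show ?thesis using tp by (simp add: algebra_simps)
      qed
    qed
    thus ?thesis using 2 by simp
  qed
qed

lemma Tfun_bcontfun:
  assumes "v \<in> Cset"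
  shows "Tfun v \<in> bcontfun"
proof (rule bcontfun_normI)
  show "continuous_on UNIV (Tfun v)" unfolding Tfun_def
    using Sf_cont[OF assms] \<omega>_props(5) \<omega>_props(1)
    by (intro continuous_intros) (auto simp: less_imp_neq[symmetric] dest: order_less_imp_not_eq2)
  fix y
  have "\<bar>Sf v y\<bar> \<le> Hmax"
  proof (cases "y \<le> 0")
    case True thus ?thesis using Hmax_ge by (simp add: Sf_def)
  next
    case False
    thus ?thesis using Sf_bounds[OF assms, of y] m_props(1)[of y] by auto
  qed
  moreover have "\<omega> y \<ge> 1" by (rule \<omega>_props)
  ultimately have "\<bar>Sf v y\<bar> / \<omega> y \<le> Hmax / 1" using Hmax_ge
    by (intro frac_le) auto
  thus "norm (Tfun v y) \<le> Hmax" using \<omega>_props(1)[of y] by (simp add: Tfun_def abs_divide)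
qed

lemma Tf_apply:
  assumes "v \<in> Cset"
  shows "apply_bcontfun (Tf v) = Tfun v"
  unfolding Tf_def using Tfun_bcontfun[OF assms] by (rule Bcontfun_inverse)

lemma uf_Tf:
  assumes "v \<in> Cset"
  shows "uf (Tf v) y = Sf v y"
  unfolding uf_def Tf_apply[OF assms] Tfun_def using \<omega>_props(1)[of y] by simp

lemma Tf_in:
  assumes "v \<in> Cset"
  shows "Tf v \<in> Cset"
proof -
  have u: "\<omega> y * apply_bcontfun (Tf v) y = Sf v y" for y using uf_Tf[OF assms] by (simp add: uf_def)
  show ?thesis unfolding Cset_def mem_Collect_eq u
  proof (intro conjI allI impI)
    fix y :: real assume "y \<le> 0"
    thus "apply_bcontfun (Tf v) y = 1" using Tf_apply[OF assms] \<omega>_props(3)[of y] by (simp add: Tfun_def Sf_def)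
  qed (use Sf_bounds[OF assms] in auto)
qed

end

context hl begin

lemma Tf_contr:
  assumes v1: "v1 \<in> Cset" and v2: "v2 \<in> Cset"
  shows "dist (Tf v1) (Tf v2) \<le> \<kappa> * dist v1 v2"
proof (rule dist_bound)
  fix y :: real
  define D where "D = dist v1 v2"
  have D0: "D \<ge> 0" by (simp add: D_def)
  have k0: "\<kappa> \<ge> 0" by (rule \<kappa>_bounds)
  show "dist (apply_bcontfun (Tf v1) y) (apply_bcontfun (Tf v2) y) \<le> \<kappa> * dist v1 v2"
  proof (cases "y \<le> 0")
    case True
    thus ?thesis using Tf_apply[OF v1] Tf_apply[OF v2] k0 by (simp add: Tfun_def Sf_def)
  next
    case False
    hence yp: "y > 0" by simp
    note c1 = Cset_props[OF v1] and c2 = Cset_props[OF v2]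
    note p1 = hf_props[OF v1] and p2 = hf_props[OF v2]
    have I1: "hf v1 integrable_on {0..y}" and I2: "hf v2 integrable_on {0..y}"
      using hf_integrable v1 v2 yp by auto
    define F where "F s = \<bar>hf v1 s - hf v2 s\<bar>" for s
    have contF: "continuous_on {0..y} F" unfolding F_def
      using p1(3) p2(3) by (intro continuous_intros) (auto elim: continuous_on_subset)
    have IF: "F integrable_on {0..y}" using contF by (rule integrable_continuous_interval)
    have pw: "F s \<le> b / (Q s * uf v1 s * uf v2 s) * (D * exp (la * s))" if s: "s \<in> {0..y}" for s
    proof -
      have s0: "0 \<le> s" using s by simp
      have "F s \<le> (1 - 2 * H) / (Q s * uf v1 s * uf v2 s) * \<bar>uf v1 s - uf v2 s\<bar>"
        unfolding F_def by (rule Rf_lip[OF H0 H1 Qpos(1) c1(6)[OF s0] c2(6)[OF s0] p1(1)[OF s0] p2(1)[OF s0] p1(2)[OF s0] p2(2)[OF s0]])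
      also have "\<bar>uf v1 s - uf v2 s\<bar> \<le> D * exp (la * s)"
      proof -
        have "\<bar>uf v1 s - uf v2 s\<bar> = \<omega> s * \<bar>apply_bcontfun v1 s - apply_bcontfun v2 s\<bar>"
          unfolding uf_def using \<omega>_props(1)[of s] by (simp add: abs_mult right_diff_distrib[symmetric])
        also have "\<dots> \<le> \<omega> s * D" using dist_bounded[of v1 s v2] \<omega>_props(1)[of s]
          by (intro mult_left_mono) (auto simp: D_def dist_real_def)
        also have "\<dots> = D * exp (la * s)" using \<omega>_props(4)[OF s0] by simp
        finally show ?thesis .
      qed
      hence "(1 - 2 * H) / (Q s * uf v1 s * uf v2 s) * \<bar>uf v1 s - uf v2 s\<bar> \<le> (1 - 2 * H) / (Q s * uf v1 s * uf v2 s) * (D * exp (la * s))"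
        using b_ge Qpos(1)[of s] c1(6)[OF s0] c2(6)[OF s0] by (intro mult_left_mono) (auto simp: b_def)
      finally show ?thesis by (simp add: b_def)
    qed
    have "integral {0..y} F \<le> (\<kappa>1 + L / (la * \<delta>)) * D * exp (la * y) * y"
    proof (rule weighted_volterra[OF \<delta>_pos(1) la_pos L_ge _ D0 yp contF])
      show "0 \<le> \<kappa>1" using \<kappa>1_lt by simp
      fix s assume s: "s \<in> {0..y}"
      have s0: "0 \<le> s" using s by simp
      have ED: "D * exp (la * s) \<ge> 0" using D0 by simp
      show "F s \<le> L * D * exp (la * s)"
      proof -
        have "b / (Q s * uf v1 s * uf v2 s) \<le> L" by (rule lip_glob) (use c1(2) c2(2) s0 in auto)
        hence "b / (Q s * uf v1 s * uf v2 s) * (D * exp (la * s)) \<le> L * (D * exp (la * s))"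
          using ED by (rule mult_right_mono)
        thus ?thesis using pw[OF s] by (simp add: mult.assoc)
      qed
      assume sd: "s \<le> \<delta>"
      show "F s \<le> \<kappa>1 * D * exp (la * s)"
      proof -
        have "b / (Q s * uf v1 s * uf v2 s) \<le> \<kappa>1" by (rule contr0) (use c1(4) c2(4) s0 sd in auto)
        hence "b / (Q s * uf v1 s * uf v2 s) * (D * exp (la * s)) \<le> \<kappa>1 * (D * exp (la * s))"
          using ED by (rule mult_right_mono)
        thus ?thesis using pw[OF s] by (simp add: mult.assoc)
      qed
    qed
    hence IFb: "integral {0..y} F \<le> \<kappa> * D * exp (la * y) * y" by (simp add: \<kappa>_def)
    have "\<bar>integral {0..y} (hf v1) - integral {0..y} (hf v2)\<bar> = norm (integral {0..y} (\<lambda>s. hf v1 s - hf v2 s))"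
      using integral_diff[OF I1 I2] by simp
    also have "\<dots> \<le> integral {0..y} F"
      by (rule integral_norm_bound_integral) (use I1 I2 IF in \<open>auto simp: F_def intro: integrable_diff\<close>)
    finally have A: "\<bar>integral {0..y} (hf v1) - integral {0..y} (hf v2)\<bar> \<le> \<kappa> * D * exp (la * y) * y"
      using IFb by linarith
    have "apply_bcontfun (Tf v1) y - apply_bcontfun (Tf v2) y = (integral {0..y} (hf v1) - integral {0..y} (hf v2)) / (y * exp (la * y))"
      using Tf_apply[OF v1] Tf_apply[OF v2] yp \<omega>_props(4)[of y]
      by (simp add: Tfun_def Sf_def diff_divide_distrib)
    hence "dist (apply_bcontfun (Tf v1) y) (apply_bcontfun (Tf v2) y) = \<bar>integral {0..y} (hf v1) - integral {0..y} (hf v2)\<bar> / (y * exp (la * y))"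
      using yp by (simp add: dist_real_def abs_divide)
    also have "\<dots> \<le> \<kappa> * D * exp (la * y) * y / (y * exp (la * y))"
      using A yp by (intro divide_right_mono) auto
    also have "\<dots> = \<kappa> * D" using yp by simp
    finally show ?thesis by (simp add: D_def)
  qed
qed

lemma Cset_closed: "closed Cset"
proof -
  have eq: "Cset = (\<Inter>y\<in>{..0}. {v. apply_bcontfun v y = 1}) \<inter>
      (\<Inter>y\<in>{0..}. {v. m y \<le> \<omega> y * apply_bcontfun v y}) \<inter>
      (\<Inter>y\<in>{0..}. {v. \<omega> y * apply_bcontfun v y \<le> Hmax}) \<inter>
      (\<Inter>y\<in>{0..\<delta>}. {v. \<bar>\<omega> y * apply_bcontfun v y - 1 - c * y\<bar> \<le> K * y\<^sup>2})"
    unfolding Cset_def by auto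
  have ev: "continuous_on UNIV (\<lambda>v::real \<Rightarrow>\<^sub>C real. apply_bcontfun v y)" for y
    by (rule continuous_eval_bcontfun)
  show ?thesis unfolding eq
    by (intro closed_Int closed_INT ballI closed_Collect_eq closed_Collect_le continuous_intros ev)
qed

lemma Cset_nonempty: "Cset \<noteq> {}"
proof -
  define u0 where "u0 y = 1 + c * min \<delta> (max 0 y)" for y
  have cd: "\<bar>c\<bar> * \<delta> \<le> 1/48"
  proof -
    have "(3 * \<bar>c\<bar> + K + \<bar>\<alpha>\<bar> + \<beta> + 1) * \<delta> = 3 * (\<bar>c\<bar> * \<delta>) + (K + \<bar>\<alpha>\<bar> + \<beta> + 1) * \<delta>"
      by (simp add: algebra_simps)
    moreover have "(K + \<bar>\<alpha>\<bar> + \<beta> + 1) * \<delta> \<ge> 0" using K_ge \<beta>_pos \<delta>_pos by simp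
    ultimately show ?thesis using \<delta>_small \<eta>_pos by linarith
  qed
  have u0b: "\<bar>u0 y - 1\<bar> \<le> 1/48" for y
  proof -
    have "\<bar>c * min \<delta> (max 0 y)\<bar> = \<bar>c\<bar> * min \<delta> (max 0 y)" using \<delta>_pos by (simp add: abs_mult)
    also have "\<dots> \<le> \<bar>c\<bar> * \<delta>" by (intro mult_left_mono) auto
    finally show ?thesis using cd by (simp add: u0_def)
  qed
  have cont: "continuous_on UNIV (\<lambda>y. u0 y / \<omega> y)"
    unfolding u0_def using \<omega>_props(5) \<omega>_props(1)
    by (intro continuous_intros) (auto dest: order_less_imp_not_eq2)
  have bc: "(\<lambda>y. u0 y / \<omega> y) \<in> bcontfun"
  proof (rule bcontfun_normI[OF cont])
    fix y
    have "\<bar>u0 y\<bar> \<le> 2" using u0b[of y] by linarith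
    hence "\<bar>u0 y\<bar> / \<omega> y \<le> 2 / 1" using \<omega>_props(2)[of y] by (intro frac_le) auto
    thus "norm (u0 y / \<omega> y) \<le> 2" using \<omega>_props(1)[of y] by (simp add: abs_divide)
  qed
  define v0 where "v0 = Bcontfun (\<lambda>y. u0 y / \<omega> y)"
  have ap: "\<omega> y * apply_bcontfun v0 y = u0 y" for y
    unfolding v0_def Bcontfun_inverse[OF bc] using \<omega>_props(1)[of y] by simp
  have "v0 \<in> Cset" unfolding Cset_def mem_Collect_eq ap
  proof (intro conjI allI impI)
    fix y :: real
    assume "y \<le> 0" thus "apply_bcontfun v0 y = 1"
      using ap[of y] \<omega>_props(3)[of y] using \<delta>_pos by (simp add: u0_def)
  next
    fix y :: real assume "0 \<le> y"
    show "m y \<le> u0 y" using u0b[of y] m_props(2)[of y] by linarith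
    show "u0 y \<le> Hmax" using u0b[of y] Hmax_ge by linarith
  next
    fix y :: real assume "0 \<le> y \<and> y \<le> \<delta>"
    hence "u0 y = 1 + c * y" by (simp add: u0_def)
    thus "\<bar>u0 y - 1 - c * y\<bar> \<le> K * y\<^sup>2" using K_ge by simp
  qed
  thus ?thesis by blast
qed

lemma exists_u:
  "\<exists>u. continuous_on UNIV u \<and> (\<forall>y\<le>0. u y = 1) \<and>
     (\<forall>y>0. u y = integral {0..y} (\<lambda>s. Phi H (Q s) (u s)) / y) \<and> (\<forall>y\<ge>0. u y > 0) \<and>
     (\<forall>y. 0 \<le> y \<and> y \<le> \<delta> \<longrightarrow> \<bar>u y - 1 - c * y\<bar> \<le> K * y\<^sup>2 \<and> \<bar>Phi H (Q y) (u y) - (1 + 2 * c * y)\<bar> \<le> K * y\<^sup>2)"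
proof -
  have "\<exists>!v\<in>Cset. Tf v = v"
  proof (rule Banach_fix)
    show "complete Cset" using Cset_closed by (simp add: complete_eq_closed)
    show "Cset \<noteq> {}" by (rule Cset_nonempty)
    show "0 \<le> \<kappa>" "\<kappa> < 1" by (rule \<kappa>_bounds)+
    show "Tf ` Cset \<subseteq> Cset" using Tf_in by auto
    show "dist (Tf x) (Tf y) \<le> \<kappa> * dist x y" if "x \<in> Cset" "y \<in> Cset" for x y
      using Tf_contr that by blast
  qed
  then obtain v where v: "v \<in> Cset" "Tf v = v" by blast
  note cp = Cset_props[OF v(1)] and hp = hf_props[OF v(1)]
  have hfe: "hf v = (\<lambda>s. Phi H (Q s) (uf v s))" by (simp add: hf_def fun_eq_iff)
  show ?thesis
  proof (intro exI[of _ "uf v"] conjI allI impI)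
    show "continuous_on UNIV (uf v)" by (rule cp(5))
    show "uf v y = 1" if "y \<le> 0" for y using cp(1) that by simp
    show "uf v y = integral {0..y} (\<lambda>s. Phi H (Q s) (uf v s)) / y" if "y > 0" for y
    proof -
      have "uf v y = uf (Tf v) y" using v(2) by simp
      also have "\<dots> = Sf v y" by (rule uf_Tf[OF v(1)])
      finally show ?thesis using that by (simp add: Sf_def hfe)
    qed
    show "uf v y > 0" if "y \<ge> 0" for y using cp(6) that by simp
    fix y assume y: "0 \<le> y \<and> y \<le> \<delta>"
    show "\<bar>uf v y - 1 - c * y\<bar> \<le> K * y\<^sup>2" using cp(4) y by simp
    show "\<bar>Phi H (Q y) (uf v y) - (1 + 2 * c * y)\<bar> \<le> K * y\<^sup>2" using hp(6) y by (simp add: hf_def)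
  qed
qed

end

lemma kappa_choice:
  fixes k1 L d :: real
  assumes "0 \<le> k1" "k1 < 1" "L \<ge> 0" "d > 0"
  shows "\<exists>la>0. k1 + L / (la * d) < 1"
proof -
  define la where "la = 2 * (L + 1) / (d * (1 - k1))"
  have p: "1 - k1 > 0" using assms by simp
  have lap: "la > 0" unfolding la_def using assms p by simp
  have "la * d = 2 * (L + 1) / (1 - k1)" unfolding la_def using assms p by (simp add: field_simps)
  hence "L / (la * d) = L / (2 * (L + 1) / (1 - k1))" by simp
  also have "\<dots> = L * (1 - k1) / (2 * (L + 1))" by (simp add: divide_divide_eq_right)
  finally have "L / (la * d) = L * (1 - k1) / (2 * (L + 1))" .
  also have "\<dots> \<le> (L + 1) * (1 - k1) / (2 * (L + 1))" using p assms
    by (intro divide_right_mono mult_right_mono) auto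
  also have "\<dots> = (1 - k1) / 2" using assms by (simp add: field_simps)
  finally have "L / (la * d) \<le> (1 - k1) / 2" .
  moreover have "(1 - k1) / 2 < 1 - k1" using p by simp
  ultimately have "k1 + L / (la * d) < 1" by linarith
  thus ?thesis using lap by blast
qed

context hl begin

lemma unique_core:
  fixes V u k hu :: "real \<Rightarrow> real"
  assumes Vc: "continuous_on {0..} V" and uc: "continuous_on {0..} u"
    and V0: "V 0 = 1" and u0: "u 0 = 1"
    and Vp: "\<And>s. s \<ge> 0 \<Longrightarrow> V s > 0" and up: "\<And>s. s \<ge> 0 \<Longrightarrow> u s > 0"
    and kc: "continuous_on {0..} k" and hc: "continuous_on {0..} hu"
    and kp: "\<And>s. s \<ge> 0 \<Longrightarrow> k s > 0" and hp: "\<And>s. s \<ge> 0 \<Longrightarrow> hu s > 0"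
    and kR: "\<And>s. s \<ge> 0 \<Longrightarrow> Rf H (Q s) (V s) (k s) = 0"
    and hR: "\<And>s. s \<ge> 0 \<Longrightarrow> Rf H (Q s) (u s) (hu s) = 0"
    and Vi: "\<And>y. y > 0 \<Longrightarrow> V y = integral {0..y} k / y"
    and ui: "\<And>y. y > 0 \<Longrightarrow> u y = integral {0..y} hu / y"
  shows "\<And>y. y \<ge> 0 \<Longrightarrow> V y = u y"
proof -
  fix Y :: real assume Y0: "Y \<ge> 0"
  define g where "g s = Q s * V s * u s" for s
  have gc: "continuous_on {0..} g" unfolding g_def by (intro continuous_intros Q_cont Vc uc)
  have g0: "g 0 = 1" by (simp add: g_def V0 u0 Qf_zero)
  have k1p: "\<kappa>1 > 0" "b < \<kappa>1" "\<kappa>1 < 1" using \<kappa>1_lt by auto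
  have "continuous (at 0 within {0..}) g" using gc by (simp add: continuous_on_eq_continuous_within)
  then obtain d where d: "d > 0" "\<And>s. s \<in> {0..} \<Longrightarrow> dist s 0 < d \<Longrightarrow> dist (g s) (g 0) < 1 - b / \<kappa>1"
    unfolding continuous_within_eps_delta using k1p by (metis diff_gt_0_iff_gt divide_less_eq_1_pos)
  define d2 where "d2 = d / 2"
  have d2p: "d2 > 0" using d by (simp add: d2_def)
  have small: "b / g s \<le> \<kappa>1" if "0 \<le> s" "s \<le> d2" for s
  proof -
    have "dist (g s) 1 < 1 - b / \<kappa>1" using d(2)[of s] that d by (simp add: g0 d2_def dist_real_def)
    hence gs: "g s > b / \<kappa>1" by (simp add: dist_real_def abs_less_iff)
    have "b / \<kappa>1 \<ge> 0" using b_ge k1p by simp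
    hence gp: "g s > 0" using gs by linarith
    have "b < \<kappa>1 * g s" using gs k1p by (simp add: field_simps)
    thus ?thesis using gp by (simp add: divide_le_eq)
  qed
  show "V Y = u Y"
  proof (cases "Y = 0")
    case True thus ?thesis using V0 u0 by simp
  next
    case False
    hence Yp: "Y > 0" using Y0 by simp
    have VcY: "continuous_on {0..Y} V" and ucY: "continuous_on {0..Y} u"
      and kcY: "continuous_on {0..Y} k" and hcY: "continuous_on {0..Y} hu"
      using Vc uc kc hc by (auto elim: continuous_on_subset)
    have mc: "continuous_on {0..Y} (\<lambda>s. min (V s) (u s))" by (intro continuous_on_min VcY ucY)
    obtain x where x: "x \<in> {0..Y}" "\<And>s. s \<in> {0..Y} \<Longrightarrow> min (V x) (u x) \<le> min (V s) (u s)"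
      using continuous_attains_inf[OF compact_Icc _ mc] Yp by auto
    define \<mu> where "\<mu> = min (V x) (u x)"
    have \<mu>p: "\<mu> > 0" using Vp up x by (simp add: \<mu>_def)
    have \<mu>le: "\<mu> \<le> V s" "\<mu> \<le> u s" if "s \<in> {0..Y}" for s using x(2)[OF that] by (auto simp: \<mu>_def)
    define L' where "L' = b / (q0 * \<mu> * \<mu>)"
    have L'0: "L' \<ge> 0" unfolding L'_def using b_ge q0_pos \<mu>p by simp
    have big: "b / g s \<le> L'" if "s \<in> {0..Y}" for s
    proof -
      have "q0 * \<mu> * \<mu> \<le> g s" unfolding g_def
        using Qpos(2)[of s] \<mu>le[OF that] \<mu>p q0_pos
        by (intro mult_mono) (auto intro: mult_nonneg_nonneg less_imp_le order_trans)
      moreover have "q0 * \<mu> * \<mu> > 0" using q0_pos \<mu>p by simp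
      ultimately show ?thesis unfolding L'_def using b_ge by (intro divide_left_mono) auto
    qed
    obtain la' where la': "la' > 0" "\<kappa>1 + L' / (la' * d2) < 1"
      using kappa_choice[of \<kappa>1 L' d2] k1p L'0 d2p by auto
    define \<kappa>' where "\<kappa>' = \<kappa>1 + L' / (la' * d2)"
    have \<kappa>'0: "\<kappa>' \<ge> 0" unfolding \<kappa>'_def using k1p L'0 la' d2p by simp
    define Dw where "Dw s = \<bar>V s - u s\<bar> * exp (- la' * s)" for s
    have Dwc: "continuous_on {0..Y} Dw" unfolding Dw_def by (intro continuous_intros VcY ucY)
    obtain z where z: "z \<in> {0..Y}" "\<And>s. s \<in> {0..Y} \<Longrightarrow> Dw s \<le> Dw z"
      using continuous_attains_sup[OF _ _ Dwc] Yp by auto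
    define M where "M = Dw z"
    have M0: "M \<ge> 0" by (simp add: M_def Dw_def)
    have Dle: "\<bar>V s - u s\<bar> \<le> M * exp (la' * s)" if "s \<in> {0..Y}" for s
    proof -
      have "\<bar>V s - u s\<bar> = Dw s * exp (la' * s)" by (simp add: Dw_def mult.assoc flip: exp_add)
      also have "\<dots> \<le> M * exp (la' * s)" using z(2)[OF that] by (simp add: M_def)
      finally show ?thesis .
    qed
    have key: "Dw y \<le> \<kappa>' * M" if y: "y \<in> {0..Y}" for y
    proof (cases "y = 0")
      case True thus ?thesis using V0 u0 \<kappa>'0 M0 by (simp add: Dw_def)
    next
      case False
      hence yp: "y > 0" using y by simp
      have sub: "{0..y} \<subseteq> {0..Y}" using y by auto
      have Ik: "k integrable_on {0..y}" and Ih: "hu integrable_on {0..y}"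
        using kcY hcY sub by (auto intro!: integrable_continuous_interval elim: continuous_on_subset)
      define F where "F s = \<bar>k s - hu s\<bar>" for s
      have Fc: "continuous_on {0..y} F" unfolding F_def using kcY hcY sub
        by (intro continuous_intros) (auto elim: continuous_on_subset)
      have pw: "F s \<le> b / g s * (M * exp (la' * s))" if s: "s \<in> {0..y}" for s
      proof -
        have s0: "s \<ge> 0" using s by simp
        have "F s \<le> (1 - 2 * H) / (Q s * V s * u s) * \<bar>V s - u s\<bar>" unfolding F_def
          by (rule Rf_lip[OF H0 H1 Qpos(1) Vp[OF s0] up[OF s0] kp[OF s0] hp[OF s0] kR[OF s0] hR[OF s0]])
        also have "\<dots> \<le> (1 - 2 * H) / (Q s * V s * u s) * (M * exp (la' * s))"
          using Dle[of s] s sub b_ge Qpos(1)[of s] Vp[OF s0] up[OF s0]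
          by (intro mult_left_mono) (auto simp: b_def)
        finally show ?thesis by (simp add: g_def b_def)
      qed
      have IF: "integral {0..y} F \<le> (\<kappa>1 + L' / (la' * d2)) * M * exp (la' * y) * y"
      proof (rule weighted_volterra[OF d2p la'(1) L'0 _ M0 yp Fc])
        show "0 \<le> \<kappa>1" using k1p by simp
        fix s assume s: "s \<in> {0..y}"
        have ED: "M * exp (la' * s) \<ge> 0" using M0 by simp
        show "F s \<le> L' * M * exp (la' * s)"
          using pw[OF s] mult_right_mono[OF big ED, of s] s sub by (auto simp: mult.assoc)
        assume "s \<le> d2"
        thus "F s \<le> \<kappa>1 * M * exp (la' * s)"
          using pw[OF s] mult_right_mono[OF small ED, of s] s by (auto simp: mult.assoc)
      qed
      have "\<bar>V y - u y\<bar> = \<bar>integral {0..y} k - integral {0..y} hu\<bar> / y"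
        using Vi[OF yp] ui[OF yp] yp by (simp add: diff_divide_distrib[symmetric] abs_divide)
      also have "\<bar>integral {0..y} k - integral {0..y} hu\<bar> \<le> integral {0..y} F"
      proof -
        have "\<bar>integral {0..y} k - integral {0..y} hu\<bar> = norm (integral {0..y} (\<lambda>s. k s - hu s))"
          using integral_diff[OF Ik Ih] by simp
        also have "\<dots> \<le> integral {0..y} F"
          by (rule integral_norm_bound_integral)
            (use Ik Ih Fc in \<open>auto simp: F_def intro: integrable_diff integrable_continuous_interval\<close>)
        finally show ?thesis .
      qed
      hence "\<bar>integral {0..y} k - integral {0..y} hu\<bar> / y \<le> integral {0..y} F / y"
        using yp by (intro divide_right_mono) auto
      finally have A: "\<bar>V y - u y\<bar> \<le> integral {0..y} F / y" .
      have "integral {0..y} F / y \<le> \<kappa>' * M * exp (la' * y) * y / y"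
        using IF yp unfolding \<kappa>'_def by (intro divide_right_mono) auto
      also have "\<dots> = \<kappa>' * M * exp (la' * y)" using yp by simp
      finally have "\<bar>V y - u y\<bar> \<le> \<kappa>' * M * exp (la' * y)" using A by linarith
      hence "\<bar>V y - u y\<bar> * exp (- la' * y) \<le> \<kappa>' * M * exp (la' * y) * exp (- la' * y)"
        by (intro mult_right_mono) auto
      thus ?thesis by (simp add: Dw_def mult.assoc flip: exp_add)
    qed
    have "M \<le> \<kappa>' * M" using key[OF z(1)] by (simp add: M_def)
    hence "M \<le> 0" using la' M0 by (simp add: \<kappa>'_def mult_le_cancel_right1)
    hence "Dw Y \<le> 0" using z(2)[of Y] Yp by (simp add: M_def)
    thus ?thesis by (simp add: Dw_def mult_le_0_iff)
  qed
qed

end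

context hl begin

lemma unique_F:
  fixes u F k :: "real \<Rightarrow> real"
  assumes uc: "continuous_on UNIV u" and u0: "u 0 = 1"
    and ui: "\<And>y. y > 0 \<Longrightarrow> u y = integral {0..y} (\<lambda>s. Phi H (Q s) (u s)) / y"
    and up: "\<And>y. y \<ge> 0 \<Longrightarrow> u y > 0"
    and F0: "F 0 = 0" and Fd: "\<And>y. y \<ge> 0 \<Longrightarrow> (F has_real_derivative k y) (at y)"
    and kc: "continuous_on {0..} k" and kp: "\<And>y. y \<ge> 0 \<Longrightarrow> k y > 0"
    and eq: "\<And>y. y > 0 \<Longrightarrow> F y \<noteq> 0 \<and> (k y)\<^sup>2 * Q y = 1 - (1 - 2 * H) * (1 - y * k y / F y)"
  shows "\<And>y. y \<ge> 0 \<Longrightarrow> F y = y * u y"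
proof -
  have Fpos: "F y > 0" if yp: "y > 0" for y
  proof -
    obtain z where z: "0 < z" "z < y" "F y - F 0 = (y - 0) * k z"
      using MVT2[of 0 y F k] yp Fd by auto
    thus ?thesis using kp[of z] yp F0 by simp
  qed
  define V where "V y = (if y = 0 then 1 else F y / y)" for y
  have Vpos_gt: "V y > 0" if "y > 0" for y using Fpos[OF that] that by (simp add: V_def)
  have R_gt: "Rf H (Q y) (V y) (k y) = 0" if y: "y > 0" for y
  proof -
    have Fy: "F y \<noteq> 0" using eq[OF y] by simp
    have e: "(k y)\<^sup>2 * Q y = 1 - (1 - 2 * H) * (1 - y * k y / F y)" using eq[OF y] by simp
    have Vy: "V y = F y / y" using y by (simp add: V_def)
    show ?thesis unfolding Rf_def Vy using e Fy y
      by (simp add: field_simps power2_eq_square)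
  qed
  have Fcont: "isCont F y" if "y \<ge> 0" for y using Fd[OF that] by (rule DERIV_isCont)
  have lim_V: "(V \<longlongrightarrow> k 0) (at_right 0)"
  proof -
    have "((\<lambda>y. (F y - F 0) / (y - 0)) \<longlongrightarrow> k 0) (at 0)"
      using Fd[of 0] by (simp add: has_field_derivative_iff)
    hence "((\<lambda>y. (F y - F 0) / (y - 0)) \<longlongrightarrow> k 0) (at_right 0)"
      by (rule filterlim_mono) (auto simp: at_le)
    moreover have "eventually (\<lambda>y. (F y - F 0) / (y - 0) = V y) (at_right 0)"
      using eventually_at_right_less[of 0] by (rule eventually_mono) (auto simp: V_def F0)
    ultimately show ?thesis by (rule Lim_transform_eventually)
  qed
  have lim_k: "(k \<longlongrightarrow> k 0) (at_right 0)"
  proof -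
    have "(k \<longlongrightarrow> k 0) (at 0 within {0..})" using kc by (simp add: continuous_on_def)
    thus ?thesis by (simp add: at_within_Ici_at_right)
  qed
  have lim_Q: "(Q \<longlongrightarrow> 1) (at_right 0)"
  proof -
    have "isCont Q 0" using Q_cont[of UNIV] by (simp add: continuous_on_eq_continuous_at)
    hence "(Q \<longlongrightarrow> Q 0) (at 0)" by (simp add: isCont_def)
    hence "(Q \<longlongrightarrow> Q 0) (at_right 0)" by (rule filterlim_mono) (auto simp: at_le)
    thus ?thesis by (simp add: Qf_zero)
  qed
  have k0: "k 0 = 1"
  proof -
    define d where "d = k 0"
    have dp: "d > 0" using kp[of 0] by (simp add: d_def)
    have "((\<lambda>y. Rf H (Q y) (V y) (k y)) \<longlongrightarrow> Rf H 1 d d) (at_right 0)"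
      unfolding Rf_def d_def by (intro tendsto_intros lim_Q lim_V lim_k)
    moreover have "eventually (\<lambda>y. Rf H (Q y) (V y) (k y) = 0) (at_right 0)"
      using eventually_at_right_less[of 0] by (rule eventually_mono) (use R_gt in auto)
    moreover have "((\<lambda>y. Rf H (Q y) (V y) (k y)) \<longlongrightarrow> 0) (at_right 0)"
      using \<open>eventually _ _\<close> by (rule tendsto_eventually)
    ultimately have "Rf H 1 d d = 0" using tendsto_unique trivial_limit_at_right_real by blast
    hence "d * (d\<^sup>2 - 1) = 0" unfolding Rf_def by (simp add: algebra_simps power2_eq_square)
    hence "d\<^sup>2 = 1" using dp by simp
    hence "d = 1" using dp by (simp add: power2_eq_1_iff)
    thus ?thesis by (simp add: d_def)
  qed
  have Vc: "continuous_on {0..} V"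
    unfolding continuous_on_eq_continuous_within
  proof
    fix x :: real assume x: "x \<in> {0..}"
    show "continuous (at x within {0..}) V"
    proof (cases "x = 0")
      case True
      have "(V \<longlongrightarrow> V 0) (at 0 within {0..})" using lim_V k0 by (simp add: at_within_Ici_at_right V_def)
      thus ?thesis using True by (simp add: continuous_within)
    next
      case False
      hence xp: "x > 0" using x by simp
      have "isCont (\<lambda>y. F y / y) x" using Fcont[of x] xp by (intro continuous_intros) auto
      moreover have "eventually (\<lambda>y. F y / y = V y) (nhds x)"
        using eventually_nhds_in_open[of "{0<..}" x] xp by (auto elim!: eventually_mono simp: V_def)
      ultimately have "isCont V x" by (subst (asm) isCont_cong) auto
      thus ?thesis by (rule continuous_at_imp_continuous_within)
    qed
  qed
  have Vp: "V s > 0" if "s \<ge> 0" for s using Vpos_gt[of s] that by (cases "s = 0") (auto simp: V_def)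
  have kR: "Rf H (Q s) (V s) (k s) = 0" if "s \<ge> 0" for s
  proof (cases "s = 0")
    case True thus ?thesis by (simp add: Rf_def V_def k0 Qf_zero)
  next
    case False thus ?thesis using R_gt that by simp
  qed
  have Vi: "V y = integral {0..y} k / y" if y: "y > 0" for y
  proof -
    have "(k has_integral (F y - F 0)) {0..y}"
    proof (rule fundamental_theorem_of_calculus)
      show "0 \<le> y" using y by simp
      fix x assume "x \<in> {0..y}"
      hence "(F has_real_derivative k x) (at x within {0..y})" using Fd[of x] by (auto intro: has_field_derivative_at_within)
      thus "(F has_vector_derivative k x) (at x within {0..y})" by (simp add: has_real_derivative_iff_has_vector_derivative)
    qed
    hence "integral {0..y} k = F y" using F0 by (simp add: integral_unique)
    thus ?thesis using y by (simp add: V_def)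
  qed
  define hu where "hu s = Phi H (Q s) (u s)" for s
  have hc: "continuous_on {0..} hu" unfolding hu_def
    by (rule Phi_cont) (use uc up in \<open>auto elim: continuous_on_subset\<close>)
  have hp: "hu s > 0" if "s \<ge> 0" for s unfolding hu_def using Phi_props(1)[OF H0 H1 Qpos(1) up[OF that]] .
  have hR: "Rf H (Q s) (u s) (hu s) = 0" if "s \<ge> 0" for s unfolding hu_def using Phi_props(2)[OF H0 H1 Qpos(1) up[OF that]] .
  have ui': "u y = integral {0..y} hu / y" if "y > 0" for y using ui[OF that] by (simp add: hu_def[abs_def])
  have VU: "V y = u y" if "y \<ge> 0" for y
    by (rule unique_core[OF Vc continuous_on_subset[OF uc] _ u0 Vp up kc hc kp hp kR hR Vi ui'])
       (use that in \<open>auto simp: V_def\<close>)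
  fix y :: real assume y: "y \<ge> 0"
  show "F y = y * u y"
  proof (cases "y = 0")
    case True thus ?thesis using F0 by simp
  next
    case False
    hence "V y = F y / y" by (simp add: V_def)
    thus ?thesis using VU[OF y] False by simp
  qed
qed

end

definition lip0 :: "(real \<Rightarrow> real) \<Rightarrow> real \<Rightarrow> bool" where
  "lip0 f a \<longleftrightarrow> (\<lambda>t. f t - a) \<in> O[at 0](\<lambda>t. t)"

lemma lip0_of_bound:
  assumes "d > 0" "\<And>t. \<bar>t\<bar> < d \<Longrightarrow> \<bar>f t - a\<bar> \<le> C * \<bar>t\<bar>"
  shows "lip0 f a"
  unfolding lip0_def
proof (rule bigoI)
  show "eventually (\<lambda>t. norm (f t - a) \<le> C * norm t) (at (0::real))"
    unfolding eventually_at using assms by (intro exI[of _ d]) (auto simp: dist_real_def)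
qed

lemma lip0_const: "lip0 (\<lambda>t. a) a"
  by (rule lip0_of_bound[of 1 _ _ 0]) auto

lemma lip0_id: "lip0 (\<lambda>t. t) 0"
  by (rule lip0_of_bound[of 1 _ _ 1]) auto

lemma bigo_cmult_t: "f \<in> O[at 0](\<lambda>t::real. t) \<Longrightarrow> (\<lambda>x. a * f x) \<in> O[at 0](\<lambda>t. t)"
  by (cases "a = 0") auto

lemma lip0_add: "lip0 f a \<Longrightarrow> lip0 g b \<Longrightarrow> lip0 (\<lambda>t. f t + g t) (a + b)"
  unfolding lip0_def
proof -
  assume "(\<lambda>t. f t - a) \<in> O[at 0](\<lambda>t. t)" "(\<lambda>t. g t - b) \<in> O[at 0](\<lambda>t. t)"
  from sum_in_bigo(1)[OF this] show "(\<lambda>t. f t + g t - (a + b)) \<in> O[at 0](\<lambda>t. t)"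
    by (simp add: algebra_simps)
qed

lemma lip0_diff: "lip0 f a \<Longrightarrow> lip0 g b \<Longrightarrow> lip0 (\<lambda>t. f t - g t) (a - b)"
  unfolding lip0_def
proof -
  assume "(\<lambda>t. f t - a) \<in> O[at 0](\<lambda>t. t)" "(\<lambda>t. g t - b) \<in> O[at 0](\<lambda>t. t)"
  from sum_in_bigo(2)[OF this] show "(\<lambda>t. f t - g t - (a - b)) \<in> O[at 0](\<lambda>t. t)"
    by (simp add: algebra_simps)
qed

lemma abs_sq_le: "\<bar>x::real\<bar> < 1 \<Longrightarrow> x * x \<le> \<bar>x\<bar>"
proof -
  assume "\<bar>x\<bar> < 1"
  hence "\<bar>x\<bar> * \<bar>x\<bar> \<le> \<bar>x\<bar> * 1" by (intro mult_left_mono) auto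
  thus ?thesis by (simp add: abs_mult_self_eq)
qed

lemma tt_bigo: "(\<lambda>t::real. t * t) \<in> O[at 0](\<lambda>t. t)"
proof (rule bigoI[of _ 1])
  show "eventually (\<lambda>t::real. norm (t * t) \<le> 1 * norm t) (at 0)"
    unfolding eventually_at
    by (intro exI[of _ 1]) (auto simp: dist_real_def intro: abs_sq_le)
qed

lemma lip0_mult: "lip0 f a \<Longrightarrow> lip0 g b \<Longrightarrow> lip0 (\<lambda>t. f t * g t) (a * b)"
  unfolding lip0_def
proof -
  assume f: "(\<lambda>t. f t - a) \<in> O[at 0](\<lambda>t. t)" and g: "(\<lambda>t. g t - b) \<in> O[at 0](\<lambda>t. t)"
  have 1: "(\<lambda>t. (f t - a) * (g t - b)) \<in> O[at 0](\<lambda>t. t)"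
    using landau_o.big.mult[OF f g] tt_bigo by (rule landau_o.big_trans)
  have 2: "(\<lambda>t. a * (g t - b)) \<in> O[at 0](\<lambda>t. t)" using g by (rule bigo_cmult_t)
  have 3: "(\<lambda>t. b * (f t - a)) \<in> O[at 0](\<lambda>t. t)" using f by (rule bigo_cmult_t)
  have "(\<lambda>t. (f t - a) * (g t - b) + a * (g t - b) + b * (f t - a)) \<in> O[at 0](\<lambda>t. t)"
    by (intro sum_in_bigo 1 2 3)
  moreover have "(\<lambda>t. (f t - a) * (g t - b) + a * (g t - b) + b * (f t - a)) = (\<lambda>t. f t * g t - a * b)"
    by (simp add: fun_eq_iff algebra_simps)
  ultimately show "(\<lambda>t. f t * g t - a * b) \<in> O[at 0](\<lambda>t. t)" by simp
qed

lemma lip0_divide: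
  assumes f: "lip0 f a" and g: "lip0 g b" and b: "b \<noteq> 0" and gc: "isCont g 0" and g0: "g 0 = b"
  shows "lip0 (\<lambda>t. f t / g t) (a / b)"
proof -
  have "eventually (\<lambda>t. \<bar>g t - b\<bar> < \<bar>b\<bar> / 2) (at 0)"
  proof -
    have "(g \<longlongrightarrow> b) (at 0)" using gc g0 by (simp add: isCont_def)
    hence "((\<lambda>t. g t - b) \<longlongrightarrow> 0) (at 0)" by (simp add: LIM_zero)
    moreover have "\<bar>b\<bar> / 2 > 0" using b by simp
    ultimately show ?thesis using order_tendstoD(2)[OF tendsto_rabs[OF \<open>((\<lambda>t. g t - b) \<longlongrightarrow> 0) (at 0)\<close>], of "\<bar>b\<bar> / 2"] by simp
  qed
  hence ev: "eventually (\<lambda>t. norm (1 / g t) \<le> (2 / \<bar>b\<bar>) * norm (1::real)) (at 0)"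
  proof (rule eventually_mono)
    fix t assume "\<bar>g t - b\<bar> < \<bar>b\<bar> / 2"
    hence gt: "\<bar>g t\<bar> \<ge> \<bar>b\<bar> / 2" by linarith
    hence "1 / \<bar>g t\<bar> \<le> 1 / (\<bar>b\<bar> / 2)" using b by (intro divide_left_mono) auto
    thus "norm (1 / g t) \<le> (2 / \<bar>b\<bar>) * norm (1::real)" by (simp add: abs_divide)
  qed
  have ig: "(\<lambda>t. 1 / g t) \<in> O[at 0](\<lambda>t. 1)" using ev by (rule bigoI)
  have ne: "eventually (\<lambda>t. g t \<noteq> 0) (at 0)"
    using \<open>eventually (\<lambda>t. \<bar>g t - b\<bar> < \<bar>b\<bar> / 2) (at 0)\<close> by (rule eventually_mono) (use b in auto)
  have A: "(\<lambda>t. (f t - a) * (1 / g t)) \<in> O[at 0](\<lambda>t. t * 1)"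
    using f ig unfolding lip0_def by (rule landau_o.big.mult)
  have B: "(\<lambda>t. (a / b) * ((g t - b) * (1 / g t))) \<in> O[at 0](\<lambda>t. t)"
  proof -
    have "(\<lambda>t. (g t - b) * (1 / g t)) \<in> O[at 0](\<lambda>t. t * 1)"
      using g ig unfolding lip0_def by (rule landau_o.big.mult)
    thus ?thesis by (intro bigo_cmult_t) simp
  qed
  have "(\<lambda>t. (f t - a) * (1 / g t) - (a / b) * ((g t - b) * (1 / g t))) \<in> O[at 0](\<lambda>t. t)"
    using A B by (intro sum_in_bigo) simp_all
  moreover have "eventually (\<lambda>t. (f t - a) * (1 / g t) - (a / b) * ((g t - b) * (1 / g t)) = f t / g t - a / b) (at 0)"
    using ne by (rule eventually_mono) (use b in \<open>simp add: field_simps\<close>)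
  ultimately show ?thesis unfolding lip0_def by (rule landau_o.big.in_cong[THEN iffD1, rotated])
qed

lemma implicit_deriv:
  fixes Q U h :: "real \<Rightarrow> real"
  assumes hc: "isCont h y" and Ud: "(U has_real_derivative U') (at y)"
    and Qd: "(Q has_real_derivative Q') (at y)"
    and R: "\<And>t. Rf H (Q t) (U t) (h t) = 0"
    and den: "2 * Q y * U y * h y - (1 - 2 * H) \<noteq> 0"
  shows "(h has_real_derivative
     (2 * H * U' - Q' * U y * (h y)\<^sup>2 - Q y * U' * (h y)\<^sup>2) / (2 * Q y * U y * h y - (1 - 2 * H))) (at y)"
proof -
  define N where "N t = Rf H (Q t) (U t) (h y)" for t
  define N' where "N' = Q' * U y * (h y)\<^sup>2 + Q y * U' * (h y)\<^sup>2 - 2 * H * U'"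
  define Den where "Den t = Q t * U t * (h t + h y) - (1 - 2 * H)" for t
  have Nd: "(N has_real_derivative N') (at y)"
    unfolding N_def Rf_def N'_def
    by (auto intro!: derivative_eq_intros Qd Ud simp: algebra_simps)
  have Ny: "N y = 0" using R[of y] by (simp add: N_def)
  have Qc: "isCont Q y" using Qd by (rule DERIV_isCont)
  have Uc: "isCont U y" using Ud by (rule DERIV_isCont)
  have Denc: "isCont Den y" unfolding Den_def by (intro continuous_intros Qc Uc hc)
  have Deny: "Den y = 2 * Q y * U y * h y - (1 - 2 * H)" by (simp add: Den_def algebra_simps)
  have id: "(h t - h y) * Den t = - N t" for t
    using R[of t] unfolding Den_def N_def Rf_def by (simp add: algebra_simps power2_eq_square)
  have lim1: "((\<lambda>t. (N t - N y) / (t - y)) \<longlongrightarrow> N') (at y)"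
    using Nd by (simp add: has_field_derivative_iff)
  have lim2: "(Den \<longlongrightarrow> Den y) (at y)" using Denc by (simp add: isCont_def)
  have lim: "((\<lambda>t. - ((N t - N y) / (t - y)) / Den t) \<longlongrightarrow> - N' / Den y) (at y)"
    using den Deny by (intro tendsto_intros lim1 lim2) auto
  have ev: "eventually (\<lambda>t. Den t \<noteq> 0) (at y)"
    using lim2 den Deny by (intro tendsto_imp_eventually_ne) auto
  have "eventually (\<lambda>t. - ((N t - N y) / (t - y)) / Den t = (h t - h y) / (t - y)) (at y)"
    using ev eventually_at_filter[THEN iffD2, of "\<lambda>t. t \<noteq> y"]
  proof -
    have "eventually (\<lambda>t. t \<noteq> y) (at y)" by (simp add: eventually_at_filter)
    with ev show ?thesis
    proof (eventually_elim)
      case (elim t)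
      have "h t - h y = - N t / Den t" using id[of t] elim by (simp add: field_simps)
      hence "(h t - h y) / (t - y) = (- N t / Den t) / (t - y)" by simp
      also have "\<dots> = - ((N t - N y) / (t - y)) / Den t" using Ny by (simp add: divide_divide_eq_left mult.commute)
      finally show ?case by simp
    qed
  qed
  with lim have "((\<lambda>t. (h t - h y) / (t - y)) \<longlongrightarrow> - N' / Den y) (at y)"
    by (rule Lim_transform_eventually)
  moreover have "- N' / Den y = (2 * H * U' - Q' * U y * (h y)\<^sup>2 - Q y * U' * (h y)\<^sup>2) / (2 * Q y * U y * h y - (1 - 2 * H))"
    unfolding Deny N'_def by (simp add: field_simps)
  ultimately show ?thesis by (simp add: has_field_derivative_iff)
qed


lemma deriv_at0_bound:
  fixes f :: "real \<Rightarrow> real"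
  assumes "d > 0" "C \<ge> 0" "\<And>t. \<bar>t\<bar> < d \<Longrightarrow> \<bar>f t - f 0 - D * t\<bar> \<le> C * t\<^sup>2"
  shows "(f has_real_derivative D) (at 0)"
proof -
  have ev: "eventually (\<lambda>t. norm ((f t - f 0) / (t - 0) - D) \<le> C * \<bar>t\<bar>) (at 0)"
    unfolding eventually_at
  proof (intro exI[of _ d] conjI ballI impI)
    show "d > 0" by fact
    fix t :: real assume "t \<in> UNIV" and t: "t \<noteq> 0 \<and> dist t 0 < d"
    have A: "\<bar>f t - f 0 - D * t\<bar> \<le> C * t\<^sup>2" using assms(3) t by (simp add: dist_real_def)
    have B: "(f t - f 0) / (t - 0) - D = (f t - f 0 - D * t) / t" using t by (simp add: field_simps)
    have C: "C * t\<^sup>2 / \<bar>t\<bar> = C * \<bar>t\<bar>"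
      using t by (cases "t > 0") (simp_all add: power2_eq_square)
    have E: "\<bar>f t - f 0 - D * t\<bar> / \<bar>t\<bar> \<le> C * t\<^sup>2 / \<bar>t\<bar>"
      using A by (rule divide_right_mono) simp
    have "norm ((f t - f 0) / (t - 0) - D) = \<bar>f t - f 0 - D * t\<bar> / \<bar>t\<bar>"
      unfolding B by (simp add: abs_divide)
    also have "\<dots> \<le> C * \<bar>t\<bar>" using E C by simp
    finally show "norm ((f t - f 0) / (t - 0) - D) \<le> C * \<bar>t\<bar>" .
  qed
  have "((\<lambda>t. C * \<bar>t\<bar>) \<longlongrightarrow> C * \<bar>0\<bar>) (at (0::real))" by (intro tendsto_intros)
  hence "((\<lambda>t. C * \<bar>t\<bar>) \<longlongrightarrow> 0) (at (0::real))" by simp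
  from Lim_null_comparison[OF ev this] have "((\<lambda>t. (f t - f 0) / (t - 0)) \<longlongrightarrow> D) (at 0)"
    by (simp add: LIM_zero_iff)
  thus ?thesis by (simp add: has_field_derivative_iff)
qed

lemma abs_le_of_sq:
  fixes t K :: real
  assumes "\<bar>t\<bar> \<le> 1" "K \<ge> 0"
  shows "K * t\<^sup>2 \<le> K * \<bar>t\<bar>"
proof -
  have "t\<^sup>2 \<le> \<bar>t\<bar>"
  proof (cases "\<bar>t\<bar> < 1")
    case True thus ?thesis using abs_sq_le[of t] by (simp add: power2_eq_square)
  next
    case False
    hence "\<bar>t\<bar> = 1" using assms(1) by simp
    hence "t\<^sup>2 = 1" by (metis abs_power2 one_power2 power2_abs)
    thus ?thesis using \<open>\<bar>t\<bar> = 1\<close> by simp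
  qed
  thus ?thesis using assms(2) by (simp add: mult_left_mono)
qed


locale mainl = A: hl H \<rho> + B: hl H "-\<rho>" for H \<rho> +
  fixes uA uB :: "real \<Rightarrow> real"
  assumes uAc: "continuous_on UNIV uA" and uA1: "\<And>y. y \<le> 0 \<Longrightarrow> uA y = 1"
    and uAi: "\<And>y. y > 0 \<Longrightarrow> uA y = integral {0..y} (\<lambda>s. Phi H (Qf H \<rho> s) (uA s)) / y"
    and uAp: "\<And>y. y \<ge> 0 \<Longrightarrow> uA y > 0"
    and uAe: "\<And>y. 0 \<le> y \<Longrightarrow> y \<le> A.\<delta> \<Longrightarrow> \<bar>uA y - 1 - A.c * y\<bar> \<le> A.K * y\<^sup>2 \<and>
        \<bar>Phi H (Qf H \<rho> y) (uA y) - (1 + 2 * A.c * y)\<bar> \<le> A.K * y\<^sup>2"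
    and uBc: "continuous_on UNIV uB" and uB1: "\<And>y. y \<le> 0 \<Longrightarrow> uB y = 1"
    and uBi: "\<And>y. y > 0 \<Longrightarrow> uB y = integral {0..y} (\<lambda>s. Phi H (Qf H (-\<rho>) s) (uB s)) / y"
    and uBp: "\<And>y. y \<ge> 0 \<Longrightarrow> uB y > 0"
    and uBe: "\<And>y. 0 \<le> y \<Longrightarrow> y \<le> B.\<delta> \<Longrightarrow> \<bar>uB y - 1 - B.c * y\<bar> \<le> B.K * y\<^sup>2 \<and>
        \<bar>Phi H (Qf H (-\<rho>) y) (uB y) - (1 + 2 * B.c * y)\<bar> \<le> B.K * y\<^sup>2"
begin

definition "cc0 = cc H \<rho>"
definition "d0 = min A.\<delta> B.\<delta>"
definition "K0 = max A.K B.K"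
definition QQ :: "real \<Rightarrow> real" where "QQ = Qf H \<rho>"
definition UU :: "real \<Rightarrow> real" where "UU y = uA y + uB (- y) - 1"
definition hh :: "real \<Rightarrow> real" where "hh y = Phi H (QQ y) (UU y)"
definition gg :: "real \<Rightarrow> real" where "gg y = y * UU y"
definition U1 :: "real \<Rightarrow> real" where "U1 y = (if y = 0 then cc0 else (hh y - UU y) / y)"
definition Q1 :: "real \<Rightarrow> real" where "Q1 y = 2 * \<rho> / (2 * H + 1) + 2 * y / (2 * H + 1)\<^sup>2"
definition EE :: "real \<Rightarrow> real" where
  "EE y = (2 * H * U1 y - Q1 y * UU y * (hh y)\<^sup>2 - QQ y * U1 y * (hh y)\<^sup>2) / (2 * QQ y * UU y * hh y - (1 - 2 * H))"

lemma Ac: "A.c = cc0" by (simp add: A.c_def cc0_def)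
lemma Bc: "B.c = - cc0" by (simp add: B.c_def cc0_def cc_neg)
lemma d0_pos: "d0 > 0" "d0 \<le> 1" using A.\<delta>_pos B.\<delta>_pos by (auto simp: d0_def)
lemma K0_ge: "K0 \<ge> 0" "A.K \<le> K0" "B.K \<le> K0" using A.K_ge by (auto simp: K0_def)

lemma QQ_pos: "QQ y > 0" unfolding QQ_def using A.Qpos by simp

lemma UU_props:
  shows "y \<ge> 0 \<Longrightarrow> UU y = uA y" "y \<le> 0 \<Longrightarrow> UU y = uB (- y)" "continuous_on UNIV UU"
    "UU y > 0" "UU 0 = 1"
proof -
  show "y \<ge> 0 \<Longrightarrow> UU y = uA y" using uB1[of "-y"] by (simp add: UU_def)
  show "y \<le> 0 \<Longrightarrow> UU y = uB (- y)" using uA1[of y] by (simp add: UU_def)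
  show "continuous_on UNIV UU" unfolding UU_def
    by (intro continuous_intros uAc continuous_on_compose2[OF uBc]) auto
  show "UU y > 0"
  proof (cases "y \<ge> 0")
    case True thus ?thesis using uAp[OF True] uB1[of "-y"] by (simp add: UU_def)
  next
    case False thus ?thesis using uBp[of "-y"] uA1[of y] by (simp add: UU_def)
  qed
  show "UU 0 = 1" using uA1[of 0] uB1[of 0] by (simp add: UU_def)
qed

lemma UU_cont: "isCont UU y" using UU_props(3) by (simp add: continuous_on_eq_continuous_at)

lemma hh_props: "hh y > 0" "Rf H (QQ y) (UU y) (hh y) = 0"
  unfolding hh_def using Phi_props[OF A.H0 A.H1 QQ_pos UU_props(4)] by auto

lemma hh_cont: "continuous_on UNIV hh" "isCont hh y"
proof -
  show "continuous_on UNIV hh" unfolding hh_def QQ_def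
    by (rule A.Phi_cont) (use UU_props in auto)
  thus "isCont hh y" by (simp add: continuous_on_eq_continuous_at)
qed

lemma est:
  assumes "\<bar>y\<bar> \<le> d0"
  shows "\<bar>UU y - 1 - cc0 * y\<bar> \<le> K0 * y\<^sup>2" "\<bar>hh y - (1 + 2 * cc0 * y)\<bar> \<le> K0 * y\<^sup>2"
proof -
  have y2: "y\<^sup>2 \<ge> 0" by simp
  have "\<bar>UU y - 1 - cc0 * y\<bar> \<le> K0 * y\<^sup>2 \<and> \<bar>hh y - (1 + 2 * cc0 * y)\<bar> \<le> K0 * y\<^sup>2"
  proof (cases "y \<ge> 0")
    case True
    have yd: "y \<le> A.\<delta>" using assms True by (simp add: d0_def)
    note e = uAe[OF True yd]
    have "A.K * y\<^sup>2 \<le> K0 * y\<^sup>2" using K0_ge y2 by (intro mult_right_mono) auto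
    thus ?thesis using e UU_props(1)[OF True] by (auto simp: hh_def QQ_def Ac)
  next
    case False
    hence ny: "- y \<ge> 0" by simp
    have yd: "- y \<le> B.\<delta>" using assms False by (simp add: d0_def)
    note e = uBe[OF ny yd]
    have "B.K * (-y)\<^sup>2 \<le> K0 * y\<^sup>2" using K0_ge y2 by (simp, intro mult_right_mono) auto
    moreover have "UU y = uB (- y)" using False UU_props(2) by simp
    moreover have "hh y = Phi H (Qf H (-\<rho>) (-y)) (uB (-y))"
      by (simp add: hh_def QQ_def Qf_neg \<open>UU y = uB (- y)\<close>)
    ultimately show ?thesis using e by (auto simp: Bc)
  qed
  thus "\<bar>UU y - 1 - cc0 * y\<bar> \<le> K0 * y\<^sup>2" "\<bar>hh y - (1 + 2 * cc0 * y)\<bar> \<le> K0 * y\<^sup>2" by auto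
qed

lemma hh0: "hh 0 = 1" using est(2)[of 0] d0_pos by simp

lemma gg_deriv: "(gg has_real_derivative hh y) (at y)"
proof -
  consider "y > 0" | "y < 0" | "y = 0" by linarith
  thus ?thesis
  proof cases
    case 1
    define hA where "hA s = Phi H (Qf H \<rho> s) (uA s)" for s
    have hAc: "continuous_on {0..} hA" unfolding hA_def
      by (rule A.Phi_cont) (use uAc uAp in \<open>auto elim: continuous_on_subset\<close>)
    have d: "((\<lambda>t. integral {0..t} hA) has_real_derivative hA y) (at y)" by (rule int_deriv[OF hAc 1])
    have "(gg has_real_derivative hA y) (at y)"
    proof (rule has_field_derivative_transform_within_open[OF d, of "{0<..}"])
      show "open {0::real<..}" by simp
      show "y \<in> {0<..}" using 1 by simp
      fix t :: real assume "t \<in> {0<..}"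
      hence t: "t > 0" by simp
      show "integral {0..t} hA = gg t"
        using uAi[OF t] t UU_props(1)[of t] by (simp add: gg_def hA_def[abs_def])
    qed
    moreover have "hA y = hh y" using UU_props(1)[of y] 1 by (simp add: hA_def hh_def QQ_def)
    ultimately show ?thesis by simp
  next
    case 2
    define hB where "hB s = Phi H (Qf H (-\<rho>) s) (uB s)" for s
    have hBc: "continuous_on {0..} hB" unfolding hB_def
      by (rule B.Phi_cont) (use uBc uBp in \<open>auto elim: continuous_on_subset\<close>)
    have ny: "- y > 0" using 2 by simp
    have d: "((\<lambda>t. integral {0..t} hB) has_real_derivative hB (- y)) (at (- y))" by (rule int_deriv[OF hBc ny])
    have d2: "((\<lambda>t. integral {0..(- t)} hB) has_real_derivative hB (- y) * (- 1)) (at y)"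
      by (rule DERIV_chain2[where f="\<lambda>t. integral {0..t} hB" and g="\<lambda>t. - t", OF d]) (auto intro!: derivative_eq_intros)
    have d3: "((\<lambda>t. - integral {0..(- t)} hB) has_real_derivative hB (- y)) (at y)"
      using DERIV_minus[OF d2] by simp
    have "(gg has_real_derivative hB (- y)) (at y)"
    proof (rule has_field_derivative_transform_within_open[OF d3, of "{..<0}"])
      show "open {..<0::real}" by simp
      show "y \<in> {..<0}" using 2 by simp
      fix t :: real assume "t \<in> {..<0}"
      hence t: "- t > 0" "t \<le> 0" by auto
      show "- integral {0..(- t)} hB = gg t"
        using uBi[OF t(1)] t UU_props(2)[of t] by (simp add: gg_def hB_def[abs_def] field_simps)
    qed
    moreover have "hB (- y) = hh y" using UU_props(2)[of y] 2 by (simp add: hB_def hh_def QQ_def Qf_neg)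
    ultimately show ?thesis by simp
  next
    case 3
    have "((\<lambda>t. (gg t - gg 0) / (t - 0)) \<longlongrightarrow> 1) (at 0)"
    proof -
      have "(UU \<longlongrightarrow> UU 0) (at 0)" using UU_cont[of 0] by (simp add: isCont_def)
      hence "(UU \<longlongrightarrow> 1) (at 0)" using UU_props(5) by simp
      moreover have "eventually (\<lambda>t. UU t = (gg t - gg 0) / (t - 0)) (at 0)"
        by (simp add: eventually_at_filter gg_def)
      ultimately show ?thesis by (rule Lim_transform_eventually)
    qed
    thus ?thesis using 3 hh0 by (simp add: has_field_derivative_iff)
  qed
qed

lemma deriv_gg: "deriv gg = hh"
  using gg_deriv by (simp add: fun_eq_iff DERIV_imp_deriv)

lemma UU_deriv: "(UU has_real_derivative U1 y) (at y)"
proof (cases "y = 0")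
  case True
  have "(UU has_real_derivative cc0) (at 0)"
  proof (rule deriv_at0_bound[of d0 K0])
    show "d0 > 0" "K0 \<ge> 0" using d0_pos K0_ge by auto
    fix t :: real assume "\<bar>t\<bar> < d0"
    thus "\<bar>UU t - UU 0 - cc0 * t\<bar> \<le> K0 * t\<^sup>2" using est(1)[of t] UU_props(5) by simp
  qed
  thus ?thesis using True by (simp add: U1_def)
next
  case False
  have d: "((\<lambda>t. gg t / t) has_real_derivative (hh y * y - gg y * 1) / (y * y)) (at y)"
    using DERIV_divide[OF gg_deriv[of y] DERIV_ident] False by simp
  have "(UU has_real_derivative (hh y * y - gg y * 1) / (y * y)) (at y)"
  proof (rule has_field_derivative_transform_within_open[OF d, of "-{0}"])
    show "open (- {0::real})" by auto
    show "y \<in> - {0}" using False by simp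
    fix t :: real assume "t \<in> - {0}"
    thus "gg t / t = UU t" by (simp add: gg_def)
  qed
  moreover have "(hh y * y - gg y * 1) / (y * y) = U1 y" using False
    by (simp add: U1_def gg_def field_simps)
  ultimately show ?thesis by simp
qed

lemma QQ_deriv: "(QQ has_real_derivative Q1 y) (at y)"
proof -
  have e: "QQ = (\<lambda>s. 1 + A.\<alpha> * s + A.\<beta> * s\<^sup>2)" by (simp add: QQ_def fun_eq_iff A.Q_eq)
  have "((\<lambda>s. 1 + A.\<alpha> * s + A.\<beta> * s\<^sup>2) has_real_derivative (0 + A.\<alpha> * 1 + A.\<beta> * (2 * y ^ 1 * 1))) (at y)"
    by (intro derivative_eq_intros) auto
  moreover have "0 + A.\<alpha> * 1 + A.\<beta> * (2 * y ^ 1 * 1) = Q1 y"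
    by (simp add: Q1_def A.\<alpha>_def A.\<beta>_def A.a_def)
  ultimately show ?thesis using e by simp
qed

lemma den_pos: "2 * QQ y * UU y * hh y - (1 - 2 * H) > 0"
proof -
  have R: "QQ y * UU y * hh y * hh y - (1 - 2 * H) * hh y = 2 * H * UU y"
    using hh_props(2)[of y] unfolding Rf_def by (simp add: power2_eq_square algebra_simps)
  have "(QQ y * UU y * hh y - (1 - 2 * H)) * hh y > 0"
    using R A.H0 UU_props(4)[of y] by (simp add: algebra_simps)
  hence "QQ y * UU y * hh y - (1 - 2 * H) > 0" using hh_props(1)[of y] by (simp add: zero_less_mult_iff)
  moreover have "QQ y * UU y * hh y > 0" using QQ_pos UU_props(4) hh_props(1) by simp
  ultimately show ?thesis by linarith
qed

lemma hh_deriv: "(hh has_real_derivative EE y) (at y)"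
  unfolding EE_def
  by (rule implicit_deriv[OF hh_cont(2) UU_deriv QQ_deriv]) (use hh_props(2) den_pos in \<open>auto simp: less_imp_neq[symmetric]\<close>)

lemma hh_deriv0: "(hh has_real_derivative 2 * cc0) (at 0)"
proof (rule deriv_at0_bound[of d0 K0])
  show "d0 > 0" "K0 \<ge> 0" using d0_pos K0_ge by auto
  fix t :: real assume "\<bar>t\<bar> < d0"
  thus "\<bar>hh t - hh 0 - 2 * cc0 * t\<bar> \<le> K0 * t\<^sup>2" using est(2)[of t] hh0 by (simp add: algebra_simps)
qed

lemma EE0: "EE 0 = 2 * cc0" using DERIV_unique[OF hh_deriv hh_deriv0] .

lemma deriv_hh: "deriv hh = EE"
  using hh_deriv by (simp add: fun_eq_iff DERIV_imp_deriv)

lemma U1_bound: "\<bar>t\<bar> < d0 \<Longrightarrow> \<bar>U1 t - cc0\<bar> \<le> (2 * K0) * \<bar>t\<bar>"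
proof (cases "t = 0")
  case True thus ?thesis by (simp add: U1_def)
next
  case False
  assume t: "\<bar>t\<bar> < d0"
  have e1: "\<bar>UU t - 1 - cc0 * t\<bar> \<le> K0 * t\<^sup>2" and e2: "\<bar>hh t - (1 + 2 * cc0 * t)\<bar> \<le> K0 * t\<^sup>2"
    using est t by auto
  have "U1 t - cc0 = ((hh t - (1 + 2 * cc0 * t)) - (UU t - 1 - cc0 * t)) / t"
    using False by (simp add: U1_def field_simps)
  hence "\<bar>U1 t - cc0\<bar> = \<bar>(hh t - (1 + 2 * cc0 * t)) - (UU t - 1 - cc0 * t)\<bar> / \<bar>t\<bar>"
    by (simp add: abs_divide)
  also have "\<dots> \<le> (2 * K0 * t\<^sup>2) / \<bar>t\<bar>"
  proof (rule divide_right_mono)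
    have "\<bar>(hh t - (1 + 2 * cc0 * t)) - (UU t - 1 - cc0 * t)\<bar> \<le> \<bar>hh t - (1 + 2 * cc0 * t)\<bar> + \<bar>UU t - 1 - cc0 * t\<bar>"
      by (rule abs_triangle_ineq4)
    thus "\<bar>(hh t - (1 + 2 * cc0 * t)) - (UU t - 1 - cc0 * t)\<bar> \<le> 2 * K0 * t\<^sup>2" using e1 e2 by linarith
  qed simp
  also have "\<dots> = (2 * K0) * \<bar>t\<bar>" using False by (cases "t > 0") (simp_all add: power2_eq_square)
  finally show ?thesis .
qed

lemma U1_cont: "isCont U1 y"
proof (cases "y = 0")
  case True
  have "isCont U1 0"
    by (rule isCont_at0_bound[of d0 "2 * K0"]) (use d0_pos K0_ge U1_bound in \<open>auto simp: U1_def\<close>)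
  thus ?thesis using True by simp
next
  case False
  have "isCont (\<lambda>t. (hh t - UU t) / t) y" using False by (intro continuous_intros hh_cont UU_cont) auto
  moreover have "eventually (\<lambda>t. (hh t - UU t) / t = U1 t) (nhds y)"
  proof -
    have "eventually (\<lambda>t. t \<noteq> 0) (nhds y)" using eventually_nhds_in_open[of "-{0}" y] False by auto
    thus ?thesis by (rule eventually_mono) (simp add: U1_def)
  qed
  ultimately show ?thesis by (subst (asm) isCont_cong) auto
qed

lemma Q1_cont: "isCont Q1 y" unfolding Q1_def using A.H0 by (intro continuous_intros) auto
lemma QQ_cont: "isCont QQ y" using QQ_deriv by (rule DERIV_isCont)

lemma EE_cont: "continuous_on UNIV EE"
proof (intro continuous_at_imp_continuous_on ballI)
  fix y :: real
  show "isCont EE y" unfolding EE_def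
    using den_pos[of y] by (intro continuous_intros U1_cont Q1_cont QQ_cont UU_cont hh_cont) auto
qed

end

lemma deriv_differentiable: "(f has_real_derivative D) (at x) \<Longrightarrow> f differentiable (at x)"
  using DERIV_deriv_iff_real_differentiable DERIV_imp_deriv by metis

context mainl begin

lemma lip0_EE: "lip0 EE (EE 0)"
proof -
  have lU1: "lip0 U1 (U1 0)"
    using lip0_of_bound[of d0 U1 cc0 "2 * K0"] d0_pos U1_bound by (simp add: U1_def)
  have lUU: "lip0 UU (UU 0)"
  proof (rule lip0_of_bound[of d0 _ _ "\<bar>cc0\<bar> + K0"])
    show "d0 > 0" using d0_pos by simp
    fix t :: real assume t: "\<bar>t\<bar> < d0"
    have "\<bar>UU t - UU 0\<bar> \<le> \<bar>UU t - 1 - cc0 * t\<bar> + \<bar>cc0\<bar> * \<bar>t\<bar>"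
      using UU_props(5) abs_triangle_ineq[of "UU t - 1 - cc0 * t" "cc0 * t"] by (simp add: abs_mult)
    also have "\<dots> \<le> K0 * t\<^sup>2 + \<bar>cc0\<bar> * \<bar>t\<bar>" using est(1)[of t] t by simp
    also have "K0 * t\<^sup>2 \<le> K0 * \<bar>t\<bar>" using abs_le_of_sq[of t K0] t d0_pos K0_ge by simp
    finally show "\<bar>UU t - UU 0\<bar> \<le> (\<bar>cc0\<bar> + K0) * \<bar>t\<bar>" by (simp add: algebra_simps)
  qed
  have lhh: "lip0 hh (hh 0)"
  proof (rule lip0_of_bound[of d0 _ _ "2 * \<bar>cc0\<bar> + K0"])
    show "d0 > 0" using d0_pos by simp
    fix t :: real assume t: "\<bar>t\<bar> < d0"
    have "\<bar>hh t - hh 0\<bar> \<le> \<bar>hh t - (1 + 2 * cc0 * t)\<bar> + \<bar>2 * cc0 * t\<bar>"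
      using hh0 abs_triangle_ineq[of "hh t - (1 + 2 * cc0 * t)" "2 * cc0 * t"] by simp
    also have "\<dots> \<le> K0 * t\<^sup>2 + 2 * \<bar>cc0\<bar> * \<bar>t\<bar>" using est(2)[of t] t by (simp add: abs_mult)
    also have "K0 * t\<^sup>2 \<le> K0 * \<bar>t\<bar>" using abs_le_of_sq[of t K0] t d0_pos K0_ge by simp
    finally show "\<bar>hh t - hh 0\<bar> \<le> (2 * \<bar>cc0\<bar> + K0) * \<bar>t\<bar>" by (simp add: algebra_simps)
  qed
  have lQQ: "lip0 QQ (QQ 0)"
  proof -
    have e: "QQ = (\<lambda>s. 1 + A.\<alpha> * s + A.\<beta> * (s * s))" by (simp add: QQ_def fun_eq_iff A.Q_eq power2_eq_square)
    have "lip0 (\<lambda>s. 1 + A.\<alpha> * s + A.\<beta> * (s * s)) (1 + A.\<alpha> * 0 + A.\<beta> * (0 * 0))"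
      by (intro lip0_add lip0_mult lip0_const lip0_id)
    thus ?thesis using e by simp
  qed
  have lQ1: "lip0 Q1 (Q1 0)"
  proof -
    have e: "Q1 = (\<lambda>s. 2 * \<rho> / (2 * H + 1) + (2 / (2 * H + 1)\<^sup>2) * s)" by (simp add: Q1_def fun_eq_iff)
    have "lip0 (\<lambda>s. 2 * \<rho> / (2 * H + 1) + (2 / (2 * H + 1)\<^sup>2) * s) (2 * \<rho> / (2 * H + 1) + (2 / (2 * H + 1)\<^sup>2) * 0)"
      by (intro lip0_add lip0_mult lip0_const lip0_id)
    thus ?thesis using e by simp
  qed
  have lnum: "lip0 (\<lambda>y. 2 * H * U1 y - Q1 y * UU y * (hh y * hh y) - QQ y * U1 y * (hh y * hh y))
      (2 * H * U1 0 - Q1 0 * UU 0 * (hh 0 * hh 0) - QQ 0 * U1 0 * (hh 0 * hh 0))"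
    by (intro lip0_diff lip0_mult lip0_const lU1 lUU lhh lQQ lQ1)
  have lden: "lip0 (\<lambda>y. 2 * QQ y * UU y * hh y - (1 - 2 * H)) (2 * QQ 0 * UU 0 * hh 0 - (1 - 2 * H))"
    by (intro lip0_diff lip0_mult lip0_const lUU lhh lQQ)
  have dc: "isCont (\<lambda>y. 2 * QQ y * UU y * hh y - (1 - 2 * H)) 0"
    by (intro continuous_intros QQ_cont UU_cont hh_cont)
  have "lip0 (\<lambda>y. (2 * H * U1 y - Q1 y * UU y * (hh y * hh y) - QQ y * U1 y * (hh y * hh y)) /
      (2 * QQ y * UU y * hh y - (1 - 2 * H)))
    ((2 * H * U1 0 - Q1 0 * UU 0 * (hh 0 * hh 0) - QQ 0 * U1 0 * (hh 0 * hh 0)) /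
      (2 * QQ 0 * UU 0 * hh 0 - (1 - 2 * H)))"
    by (rule lip0_divide[OF lnum lden _ dc]) (use den_pos[of 0] in auto)
  thus ?thesis unfolding EE_def[abs_def] by (simp add: power2_eq_square)
qed

lemma ode_gg: "ode_sol H \<rho> gg"
  unfolding ode_sol_def C1_real_def deriv_gg
proof (intro conjI allI impI)
  fix y :: real
  show "gg differentiable (at y)" using gg_deriv by (rule deriv_differentiable)
next
  show "continuous_on UNIV hh" by (rule hh_cont)
next
  show "gg 0 = 0" by (simp add: gg_def)
next
  show "hh 0 > 0" using hh0 by simp
next
  fix y :: real assume y: "y \<noteq> 0"
  show "gg y \<noteq> 0" using y UU_props(4)[of y] by (simp add: gg_def)
  have U: "UU y > 0" by (rule UU_props)
  have R: "QQ y * UU y * (hh y)\<^sup>2 - (1 - 2 * H) * hh y - 2 * H * UU y = 0" using hh_props(2)[of y] by (simp add: Rf_def)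
  have "(hh y)\<^sup>2 * QQ y = 2 * H + (1 - 2 * H) * hh y / UU y"
    using R U by (simp add: field_simps)
  also have "\<dots> = 1 - (1 - 2 * H) * (1 - y * hh y / gg y)"
    using U y by (simp add: gg_def field_simps)
  finally show "(hh y)\<^sup>2 * (1 + 2 * \<rho> * y / (2 * H + 1) + y\<^sup>2 / (2 * H + 1)\<^sup>2) = 1 - (1 - 2 * H) * (1 - y * hh y / gg y)"
    by (simp add: QQ_def Qf_def)
qed

lemma C2_gg: "C2_real gg"
  unfolding C2_real_def
proof
  show "C1_real gg" using ode_gg by (simp add: ode_sol_def)
  show "C1_real (deriv gg)" unfolding C1_real_def deriv_gg deriv_hh
    using hh_deriv deriv_differentiable EE_cont by blast
qed

lemma unique_gg:
  assumes f: "ode_sol H \<rho> f"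
  shows "f = gg"
proof -
  define k where "k = deriv f"
  have fd: "\<And>y. f differentiable (at y)" and kc: "continuous_on UNIV k" and f0: "f 0 = 0" and k0: "k 0 > 0"
    and eq: "\<And>y. y \<noteq> 0 \<Longrightarrow> f y \<noteq> 0 \<and> (k y)\<^sup>2 * Qf H \<rho> y = 1 - (1 - 2 * H) * (1 - y * k y / f y)"
    using f unfolding ode_sol_def C1_real_def k_def Qf_def by auto
  have Fd: "(f has_real_derivative k y) (at y)" for y
    using fd[of y] by (simp add: k_def DERIV_deriv_iff_real_differentiable)
  have knz: "k y \<noteq> 0" for y
  proof (cases "y = 0")
    case True thus ?thesis using k0 by simp
  next
    case False
    show ?thesis
    proof
      assume "k y = 0"
      hence "1 - (1 - 2 * H) * (1 - y * k y / f y) = 0" using eq[OF False] by simp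
      hence "2 * H = 0" using \<open>k y = 0\<close> by simp
      thus False using A.H0 by simp
    qed
  qed
  have kp: "k y > 0" for y
  proof (rule ccontr)
    assume "\<not> k y > 0"
    hence ky: "k y \<le> 0" by simp
    have "\<exists>x. k x = 0"
    proof (cases "y \<ge> 0")
      case True
      from IVT2'[of k y 0 0, OF ky less_imp_le[OF k0] True continuous_on_subset[OF kc]]
      show ?thesis by auto
    next
      case False
      from IVT'[of k y 0 0, OF ky less_imp_le[OF k0] _ continuous_on_subset[OF kc]] False
      show ?thesis by auto
    qed
    thus False using knz by auto
  qed
  have pos: "f y = y * uA y" if "y \<ge> 0" for y
  proof (rule A.unique_F[OF uAc _ uAi uAp f0 Fd _ kp eq])
    show "uA 0 = 1" using uA1[of 0] by simp
    show "continuous_on {0..} k" using kc by (rule continuous_on_subset) auto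
  qed (use that in auto)
  define F2 where "F2 t = - f (- t)" for t
  define k2 where "k2 t = k (- t)" for t
  have Fd2: "(F2 has_real_derivative k2 t) (at t)" for t
  proof -
    have "((\<lambda>t. f (- t)) has_real_derivative k (- t) * (- 1)) (at t)"
      by (rule DERIV_chain2[where f=f and g="\<lambda>t. - t", OF Fd]) (auto intro!: derivative_eq_intros)
    from DERIV_minus[OF this] show ?thesis by (simp add: F2_def[abs_def] k2_def)
  qed
  have kc2: "continuous_on {0..} k2" unfolding k2_def
    by (rule continuous_on_compose2[OF kc]) (auto intro: continuous_intros)
  have eq2: "F2 t \<noteq> 0 \<and> (k2 t)\<^sup>2 * Qf H (- \<rho>) t = 1 - (1 - 2 * H) * (1 - t * k2 t / F2 t)" if t: "t > 0" for t
  proof -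
    have e: "f (- t) \<noteq> 0 \<and> (k (- t))\<^sup>2 * Qf H \<rho> (- t) = 1 - (1 - 2 * H) * (1 - (- t) * k (- t) / f (- t))"
      using eq[of "- t"] t by simp
    have q: "Qf H (- \<rho>) t = Qf H \<rho> (- t)" using Qf_neg[of H \<rho> "- t"] by simp
    show ?thesis using e q by (simp add: F2_def k2_def)
  qed
  have neg: "F2 t = t * uB t" if "t \<ge> 0" for t
  proof (rule B.unique_F[OF uBc _ uBi uBp _ Fd2 kc2 _ eq2])
    show "uB 0 = 1" using uB1[of 0] by simp
    show "F2 0 = 0" using f0 by (simp add: F2_def)
    show "k2 y > 0" for y using kp by (simp add: k2_def)
  qed (use that in auto)
  show "f = gg"
  proof
    fix y :: real
    show "f y = gg y"
    proof (cases "y \<ge> 0")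
      case True thus ?thesis using pos[OF True] UU_props(1)[OF True] by (simp add: gg_def)
    next
      case False
      hence "F2 (- y) = (- y) * uB (- y)" using neg[of "- y"] by simp
      hence "f y = y * uB (- y)" by (simp add: F2_def)
      thus ?thesis using False UU_props(2)[of y] by (simp add: gg_def)
    qed
  qed
qed

lemma final:
  "\<exists>g. ode_sol H \<rho> g \<and> (\<forall>f. ode_sol H \<rho> f \<longrightarrow> f = g) \<and>
     C2_real g \<and>
     (\<lambda>y. g y - (deriv g 0 * y + deriv (deriv g) 0 * y\<^sup>2 / 2)) \<in> O[at 0](\<lambda>y. y ^ 3) \<and>
     (\<lambda>y. deriv g y - (deriv g 0 + deriv (deriv g) 0 * y)) \<in> O[at 0](\<lambda>y. y\<^sup>2) \<and>
     (\<lambda>y. deriv (deriv g) y - deriv (deriv g) 0) \<in> O[at 0](\<lambda>y. y) \<and>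
     (\<forall>y. y \<noteq> 0 \<longrightarrow> g y / y > 0)"
proof (intro exI[of _ gg] conjI allI impI)
  show "ode_sol H \<rho> gg" by (rule ode_gg)
  show "f = gg" if "ode_sol H \<rho> f" for f using unique_gg that by blast
  show "C2_real gg" by (rule C2_gg)
  show "(\<lambda>y. gg y - (deriv gg 0 * y + deriv (deriv gg) 0 * y\<^sup>2 / 2)) \<in> O[at 0](\<lambda>y. y ^ 3)"
    unfolding deriv_gg deriv_hh hh0 EE0
  proof (rule bigoI[of _ K0])
      show "eventually (\<lambda>y. norm (gg y - (1 * y + 2 * cc0 * y\<^sup>2 / 2)) \<le> K0 * norm (y ^ 3)) (at 0)"
      unfolding eventually_at
      proof (intro exI[of _ d0] conjI ballI impI)
        show "d0 > 0" by (rule d0_pos)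
        fix y :: real assume "y \<in> UNIV" "y \<noteq> 0 \<and> dist y 0 < d0"
        hence yd: "\<bar>y\<bar> \<le> d0" by (simp add: dist_real_def)
        have "gg y - (1 * y + 2 * cc0 * y\<^sup>2 / 2) = y * (UU y - 1 - cc0 * y)"
          by (simp add: gg_def algebra_simps power2_eq_square)
        hence "norm (gg y - (1 * y + 2 * cc0 * y\<^sup>2 / 2)) = \<bar>y\<bar> * \<bar>UU y - 1 - cc0 * y\<bar>"
          by (simp add: abs_mult)
        also have "\<dots> \<le> \<bar>y\<bar> * (K0 * y\<^sup>2)" using est(1)[OF yd] by (intro mult_left_mono) auto
        also have "\<dots> = K0 * norm (y ^ 3)" by (simp add: abs_mult power2_eq_square power3_eq_cube)
        finally show "norm (gg y - (1 * y + 2 * cc0 * y\<^sup>2 / 2)) \<le> K0 * norm (y ^ 3)" .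
      qed
  qed
  show "(\<lambda>y. deriv gg y - (deriv gg 0 + deriv (deriv gg) 0 * y)) \<in> O[at 0](\<lambda>y. y\<^sup>2)"
    unfolding deriv_gg deriv_hh hh0 EE0
  proof (rule bigoI[of _ K0])
    show "eventually (\<lambda>y. norm (hh y - (1 + 2 * cc0 * y)) \<le> K0 * norm (y\<^sup>2)) (at 0)"
      unfolding eventually_at
    proof (intro exI[of _ d0] conjI ballI impI)
      show "d0 > 0" by (rule d0_pos)
      fix y :: real assume "y \<in> UNIV" "y \<noteq> 0 \<and> dist y 0 < d0"
      hence yd: "\<bar>y\<bar> \<le> d0" by (simp add: dist_real_def)
      show "norm (hh y - (1 + 2 * cc0 * y)) \<le> K0 * norm (y\<^sup>2)" using est(2)[OF yd] by simp
    qed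
  qed
  show "(\<lambda>y. deriv (deriv gg) y - deriv (deriv gg) 0) \<in> O[at 0](\<lambda>y. y)"
    using lip0_EE unfolding deriv_gg deriv_hh lip0_def .
  fix y :: real assume "y \<noteq> 0"
  thus "gg y / y > 0" using UU_props(4)[of y] by (simp add: gg_def)
qed

end

theorem lemmaA2:
  fixes H \<rho> :: real
  assumes "0 < H" and "H \<le> 1/2" and "-1 < \<rho>" and "\<rho> < 1"
  shows "\<exists>g. ode_sol H \<rho> g \<and> (\<forall>f. ode_sol H \<rho> f \<longrightarrow> f = g) \<and>
     C2_real g \<and>
     (\<lambda>y. g y - (deriv g 0 * y + deriv (deriv g) 0 * y\<^sup>2 / 2)) \<in> O[at 0](\<lambda>y. y ^ 3) \<and>
     (\<lambda>y. deriv g y - (deriv g 0 + deriv (deriv g) 0 * y)) \<in> O[at 0](\<lambda>y. y\<^sup>2) \<and>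
     (\<lambda>y. deriv (deriv g) y - deriv (deriv g) 0) \<in> O[at 0](\<lambda>y. y) \<and>
     (\<forall>y. y \<noteq> 0 \<longrightarrow> g y / y > 0)"
proof -
  have r: "\<bar>\<rho>\<bar> < 1" "\<bar>- \<rho>\<bar> < 1" using assms by auto
  interpret A: hl H \<rho> using assms r by unfold_locales auto
  interpret B: hl H "- \<rho>" using assms r by unfold_locales auto
  obtain uA where uA: "continuous_on UNIV uA" "\<forall>y\<le>0. uA y = 1"
     "\<forall>y>0. uA y = integral {0..y} (\<lambda>s. Phi H (Qf H \<rho> s) (uA s)) / y" "\<forall>y\<ge>0. uA y > 0"
     "\<forall>y. 0 \<le> y \<and> y \<le> A.\<delta> \<longrightarrow> \<bar>uA y - 1 - A.c * y\<bar> \<le> A.K * y\<^sup>2 \<and> \<bar>Phi H (Qf H \<rho> y) (uA y) - (1 + 2 * A.c * y)\<bar> \<le> A.K * y\<^sup>2"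
    using A.exists_u by blast
  obtain uB where uB: "continuous_on UNIV uB" "\<forall>y\<le>0. uB y = 1"
     "\<forall>y>0. uB y = integral {0..y} (\<lambda>s. Phi H (Qf H (- \<rho>) s) (uB s)) / y" "\<forall>y\<ge>0. uB y > 0"
     "\<forall>y. 0 \<le> y \<and> y \<le> B.\<delta> \<longrightarrow> \<bar>uB y - 1 - B.c * y\<bar> \<le> B.K * y\<^sup>2 \<and> \<bar>Phi H (Qf H (- \<rho>) y) (uB y) - (1 + 2 * B.c * y)\<bar> \<le> B.K * y\<^sup>2"
    using B.exists_u by blast
  interpret M: mainl H \<rho> uA uB
    by (unfold_locales) (use uA uB in auto)
  show ?thesis by (rule M.final)
qed


end
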